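(* There exists a speedable number that is not regainingly approximable.
   Context: A real $x$ is regainingly approximable if there is a computable non-decreasing sequence of rationals $(x_n)_n$ converging to $x$ with $x - x_n < 2^{-n}$ for infinitely many $n\in\mathbb{N}$. A left-computable real $x$ (i.e. limit of a computable non-decreasing sequence of rationals) is speedable if there exist $\rho\in(0,1)$ and a computable strictly increasing sequence of rationals $(x_n)_n$ converging to $x$ such that $\frac{x-x_{n+1}}{x-x_n}\le\rho$ for infinitely many $n\in\mathbb{N}$. *)

theory Defs
  imports Complex_Main
begin

datatype recf =
    Zr
  | Sc
  | Proj nat
  | Cn recf "recf list"
  | Pr recf recf
  | Mn recf

inductive eval :: "recf \<Rightarrow> nat list \<Rightarrow> nat \<Rightarrow> bool" where
  eval_Zr: "eval Zr xs 0"
| eval_Sc: "eval Sc (x # xs) (Suc x)"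
| eval_Proj: "i < length xs \<Longrightarrow> eval (Proj i) xs (xs ! i)"
| eval_Cn: "list_all2 (\<lambda>g y. eval g xs y) gs ys \<Longrightarrow> eval f ys z \<Longrightarrow> eval (Cn f gs) xs z"
| eval_Pr0: "eval f xs y \<Longrightarrow> eval (Pr f g) (0 # xs) y"
| eval_PrS: "eval (Pr f g) (n # xs) y \<Longrightarrow> eval g (n # y # xs) z \<Longrightarrow> eval (Pr f g) (Suc n # xs) z"
| eval_Mn: "eval f (n # xs) 0 \<Longrightarrow> (\<forall>m<n. \<exists>y. eval f (m # xs) (Suc y)) \<Longrightarrow> eval (Mn f) xs n"

definition computable_fun :: "(nat \<Rightarrow> nat) \<Rightarrow> bool" where
  "computable_fun g \<longleftrightarrow> (\<exists>t. \<forall>n. eval t [n] (g n))"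

definition computable_rat_seq :: "(nat \<Rightarrow> rat) \<Rightarrow> bool" where
  "computable_rat_seq q \<longleftrightarrow> (\<exists>a b c. computable_fun a \<and> computable_fun b \<and> computable_fun c \<and>
     (\<forall>n. q n = (of_nat (a n) - of_nat (b n)) / of_nat (Suc (c n))))"

definition left_computable :: "real \<Rightarrow> bool" where
  "left_computable x \<longleftrightarrow> (\<exists>q. computable_rat_seq q \<and> mono q \<and>
     (\<lambda>n. real_of_rat (q n)) \<longlonglongrightarrow> x)"

definition regainingly_approximable :: "real \<Rightarrow> bool" where
  "regainingly_approximable x \<longleftrightarrow> (\<exists>q. computable_rat_seq q \<and> mono q \<and>
     (\<lambda>n. real_of_rat (q n)) \<longlonglongrightarrow> x \<and>
     (\<exists>\<^sub>F n in sequentially. x - real_of_rat (q n) < 2 powi (- int n)))"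

definition speedable :: "real \<Rightarrow> bool" where
  "speedable x \<longleftrightarrow> left_computable x \<and>
     (\<exists>\<rho>::real. 0 < \<rho> \<and> \<rho> < 1 \<and> (\<exists>q. computable_rat_seq q \<and> strict_mono q \<and>
        (\<lambda>n. real_of_rat (q n)) \<longlonglongrightarrow> x \<and>
        (\<exists>\<^sub>F n in sequentially.
           (x - real_of_rat (q (Suc n))) / (x - real_of_rat (q n)) \<le> \<rho>)))"

end

theory Submission
  imports Defs "HOL-Library.Nat_Bijection"
begin


definition rc :: "nat \<Rightarrow> (nat list \<Rightarrow> nat) \<Rightarrow> bool" where
  "rc n f \<longleftrightarrow> (\<exists>t. \<forall>xs. length xs = n \<longrightarrow> eval t xs (f xs))"

lemma rc_zero: "rc n (\<lambda>_. 0)"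
  unfolding rc_def by (rule exI[of _ Zr]) (auto intro: eval.intros)

lemma rc_proj: "i < n \<Longrightarrow> rc n (\<lambda>xs. xs ! i)"
  unfolding rc_def by (rule exI[of _ "Proj i"]) (auto intro: eval.intros)

lemma rc_Suc: "rc n f \<Longrightarrow> rc n (\<lambda>xs. Suc (f xs))"
  unfolding rc_def
proof (elim exE)
  fix t assume t: "\<forall>xs. length xs = n \<longrightarrow> eval t xs (f xs)"
  show "\<exists>t. \<forall>xs. length xs = n \<longrightarrow> eval t xs (Suc (f xs))"
    by (rule exI[of _ "Cn Sc [t]"]) (auto intro!: eval.intros simp: t)
qed

lemma rc_list: "\<forall>g\<in>set gs. rc n g \<Longrightarrow> \<exists>ts. \<forall>xs. length xs = n \<longrightarrow> list_all2 (\<lambda>t y. eval t xs y) ts (map (\<lambda>g. g xs) gs)"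
proof (induction gs)
  case Nil show ?case by (intro exI[of _ "[]"]) simp
next
  case (Cons g gs)
  then obtain ts where ts: "\<forall>xs. length xs = n \<longrightarrow> list_all2 (\<lambda>t y. eval t xs y) ts (map (\<lambda>g. g xs) gs)" by auto
  from Cons obtain t where t: "\<forall>xs. length xs = n \<longrightarrow> eval t xs (g xs)" unfolding rc_def by auto
  show ?case by (rule exI[of _ "t#ts"]) (simp add: t ts)
qed

lemma rc_comp: "rc m h \<Longrightarrow> length gs = m \<Longrightarrow> \<forall>g\<in>set gs. rc n g \<Longrightarrow> rc n (\<lambda>xs. h (map (\<lambda>g. g xs) gs))"
proof -
  assume h: "rc m h" and l: "length gs = m" and g: "\<forall>g\<in>set gs. rc n g"
  from h obtain th where th: "\<forall>xs. length xs = m \<longrightarrow> eval th xs (h xs)" unfolding rc_def by auto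
  from rc_list[OF g] obtain ts where ts: "\<forall>xs. length xs = n \<longrightarrow> list_all2 (\<lambda>t y. eval t xs y) ts (map (\<lambda>g. g xs) gs)" by auto
  show ?thesis unfolding rc_def
  proof (rule exI[of _ "Cn th ts"], intro allI impI)
    fix xs :: "nat list" assume "length xs = n"
    then show "eval (Cn th ts) xs (h (map (\<lambda>g. g xs) gs))"
      by (intro eval_Cn[where ys="map (\<lambda>g. g xs) gs"]) (auto simp: ts th l)
  qed
qed

lemma rc_prim:
  assumes f: "rc n f" and g: "rc (Suc (Suc n)) g"
    and h0: "\<And>ys. length ys = n \<Longrightarrow> h (0#ys) = f ys"
    and hS: "\<And>k ys. length ys = n \<Longrightarrow> h (Suc k#ys) = g (k # h (k#ys) # ys)"
  shows "rc (Suc n) h"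
proof -
  from f obtain tf where tf: "\<forall>xs. length xs = n \<longrightarrow> eval tf xs (f xs)" unfolding rc_def by auto
  from g obtain tg where tg: "\<forall>xs. length xs = Suc (Suc n) \<longrightarrow> eval tg xs (g xs)" unfolding rc_def by auto
  have "\<forall>ys. length ys = n \<longrightarrow> eval (Pr tf tg) (k#ys) (h (k#ys))" for k
  proof (induction k)
    case 0 then show ?case using tf h0 by (auto intro: eval.intros)
  next
    case (Suc k) then show ?case using tg hS by (auto intro: eval.intros)
  qed
  then show ?thesis unfolding rc_def
    by (intro exI[of _ "Pr tf tg"]) (metis length_Suc_conv)
qed

lemma rc_cong: "rc n f \<Longrightarrow> (\<And>xs. length xs = n \<Longrightarrow> f xs = g xs) \<Longrightarrow> rc n g"
  unfolding rc_def by auto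

lemma map_nth': "map ((!) xs) [0..<length xs] = xs"
  by (rule nth_equalityI) simp_all

lemma rc_comp1: "rc 1 h \<Longrightarrow> rc n a \<Longrightarrow> rc n (\<lambda>xs. h [a xs])"
  using rc_comp[of 1 h "[a]" n] by simp
lemma rc_comp2: "rc 2 h \<Longrightarrow> rc n a \<Longrightarrow> rc n b \<Longrightarrow> rc n (\<lambda>xs. h [a xs, b xs])"
  using rc_comp[of 2 h "[a,b]" n] by simp
lemma rc_comp3: "rc 3 h \<Longrightarrow> rc n a \<Longrightarrow> rc n b \<Longrightarrow> rc n c \<Longrightarrow> rc n (\<lambda>xs. h [a xs, b xs, c xs])"
  using rc_comp[of 3 h "[a,b,c]" n] by (simp add: numeral_3_eq_3)

lemma rc_comp_cons: "rc (Suc n) h \<Longrightarrow> rc n a \<Longrightarrow> rc n (\<lambda>xs. h (a xs # xs))"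
proof -
  assume h: "rc (Suc n) h" and a: "rc n a"
  have "rc n (\<lambda>xs. h (map (\<lambda>g. g xs) (a # map (\<lambda>i xs. xs ! i) [0..<n])))"
    by (rule rc_comp[OF h]) (auto simp: a rc_proj)
  then show ?thesis
    by (rule rc_cong) (auto simp: comp_def map_nth')
qed

lemma rc_comp_cons2: "rc (Suc (Suc n)) h \<Longrightarrow> rc n a \<Longrightarrow> rc n b \<Longrightarrow> rc n (\<lambda>xs. h (a xs # b xs # xs))"
proof -
  assume h: "rc (Suc (Suc n)) h" and a: "rc n a" and b: "rc n b"
  have "rc n (\<lambda>xs. h (map (\<lambda>g. g xs) (a # b # map (\<lambda>i xs. xs ! i) [0..<n])))"
    by (rule rc_comp[OF h]) (auto simp: a b rc_proj)
  then show ?thesis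
    by (rule rc_cong) (auto simp: comp_def map_nth')
qed

lemma rc_skip1: "rc (Suc n) h \<Longrightarrow> rc (Suc (Suc n)) (\<lambda>xs. h (hd xs # drop 2 xs))"
proof -
  assume h: "rc (Suc n) h"
  have "rc (Suc (Suc n)) (\<lambda>xs. h (map (\<lambda>g. g xs) ((\<lambda>xs. xs ! 0) # map (\<lambda>i xs. xs ! (i+2)) [0..<n])))"
    by (rule rc_comp[OF h]) (auto simp: rc_proj)
  then show ?thesis
  proof (rule rc_cong)
    fix xs :: "nat list" assume l: "length xs = Suc (Suc n)"
    have "map (\<lambda>i. xs ! (i+2)) [0..<n] = drop 2 xs"
      using l by (intro nth_equalityI) auto
    moreover have "xs ! 0 = hd xs" using l by (cases xs) auto
    ultimately show "h (map (\<lambda>g. g xs) ((\<lambda>xs. xs ! 0) # map (\<lambda>i xs. xs ! (i+2)) [0..<n])) = h (hd xs # drop 2 xs)"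
      by (simp add: comp_def)
  qed
qed

lemma rc_const: "rc n (\<lambda>_. c)"
  by (induction c) (auto intro: rc_zero rc_Suc[where f="\<lambda>_. _"])



named_theorems rci

lemma rc_add2: "rc 2 (\<lambda>xs. xs!0 + xs!1)"
proof -
  have "rc (Suc 1) (\<lambda>xs. xs!0 + xs!1)"
    by (rule rc_prim[where f="\<lambda>ys. ys!0" and g="\<lambda>zs. Suc (zs!1)"])
       (auto intro!: rc_proj rc_Suc)
  then show ?thesis by (simp add: numeral_2_eq_2)
qed

lemma rc_add[rci]: "rc n a \<Longrightarrow> rc n b \<Longrightarrow> rc n (\<lambda>xs. a xs + b xs)"
  using rc_comp2[OF rc_add2] by simp

lemma rc_mult2: "rc 2 (\<lambda>xs. xs!0 * xs!1)"
proof -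
  have "rc (Suc 1) (\<lambda>xs. xs!0 * xs!1)"
    by (rule rc_prim[where f="\<lambda>ys. 0" and g="\<lambda>zs. zs!1 + zs!2"])
       (auto intro!: rc_proj rc_add rc_zero)
  then show ?thesis by (simp add: numeral_2_eq_2)
qed

lemma rc_mult[rci]: "rc n a \<Longrightarrow> rc n b \<Longrightarrow> rc n (\<lambda>xs. a xs * b xs)"
  using rc_comp2[OF rc_mult2] by simp

lemma rc_pred1: "rc 1 (\<lambda>xs. xs!0 - 1)"
proof -
  have "rc (Suc 0) (\<lambda>xs. xs!0 - 1)"
    by (rule rc_prim[where f="\<lambda>ys. 0" and g="\<lambda>zs. zs!0"])
       (auto intro: rc_proj rc_zero)
  then show ?thesis by (simp add: numeral_2_eq_2)
qed

lemma rc_subr: "rc 2 (\<lambda>xs. xs!1 - xs!0)"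
proof -
  have "rc (Suc 1) (\<lambda>xs. xs!1 - xs!0)"
    by (rule rc_prim[where f="\<lambda>ys. ys!0" and g="\<lambda>zs. zs!1 - 1"])
       (auto intro: rc_proj rc_comp1[OF rc_pred1, where a="\<lambda>zs. zs!1", simplified])
  then show ?thesis by (simp add: numeral_2_eq_2)
qed

lemma rc_sub[rci]: "rc n a \<Longrightarrow> rc n b \<Longrightarrow> rc n (\<lambda>xs. a xs - b xs)"
  using rc_comp2[OF rc_subr, of n b a] by simp

lemma rc_powr: "rc 2 (\<lambda>xs. xs!1 ^ xs!0)"
proof -
  have "rc (Suc 1) (\<lambda>xs. xs!1 ^ xs!0)"
    by (rule rc_prim[where f="\<lambda>ys. 1" and g="\<lambda>zs. zs!1 * zs!2"])
       (auto intro!: rc_proj rc_mult rc_const)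
  then show ?thesis by (simp add: numeral_2_eq_2)
qed

lemma rc_pow[rci]: "rc n a \<Longrightarrow> rc n b \<Longrightarrow> rc n (\<lambda>xs. a xs ^ b xs)"
  using rc_comp2[OF rc_powr, of n b a] by simp

lemmas [rci] = rc_const rc_Suc

definition rp :: "nat \<Rightarrow> (nat list \<Rightarrow> bool) \<Rightarrow> bool" where
  "rp n P \<longleftrightarrow> rc n (\<lambda>xs. if P xs then 1 else 0)"

lemma rp_less[rci]: "rc n a \<Longrightarrow> rc n b \<Longrightarrow> rp n (\<lambda>xs. a xs < b xs)"
  unfolding rp_def
  by (rule rc_cong[where f="\<lambda>xs. 1 - (1 - (b xs - a xs))"]) (auto intro!: rci)

lemma rp_eq[rci]: "rc n a \<Longrightarrow> rc n b \<Longrightarrow> rp n (\<lambda>xs. a xs = b xs)"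
  unfolding rp_def
  by (rule rc_cong[where f="\<lambda>xs. 1 - ((a xs - b xs) + (b xs - a xs))"]) (auto intro!: rci)

lemma rp_not[rci]: "rp n P \<Longrightarrow> rp n (\<lambda>xs. \<not> P xs)"
  unfolding rp_def
  by (rule rc_cong[where f="\<lambda>xs. 1 - (if P xs then 1 else 0)"]) (auto intro!: rci)

lemma rp_and[rci]: "rp n P \<Longrightarrow> rp n Q \<Longrightarrow> rp n (\<lambda>xs. P xs \<and> Q xs)"
  unfolding rp_def
  by (rule rc_cong[where f="\<lambda>xs. (if P xs then 1 else 0) * (if Q xs then 1 else 0)"]) (auto intro!: rci)

lemma rp_or[rci]: "rp n P \<Longrightarrow> rp n Q \<Longrightarrow> rp n (\<lambda>xs. P xs \<or> Q xs)"
  using rp_not[OF rp_and[OF rp_not rp_not], of n P Q] by simp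

lemma rp_imp[rci]: "rp n P \<Longrightarrow> rp n Q \<Longrightarrow> rp n (\<lambda>xs. P xs \<longrightarrow> Q xs)"
  using rp_or[OF rp_not, of n P Q] by simp

lemma rp_le[rci]: "rc n a \<Longrightarrow> rc n b \<Longrightarrow> rp n (\<lambda>xs. a xs \<le> b xs)"
  using rp_not[OF rp_less, of n b a] by (simp add: not_less)

lemma rp_neq[rci]: "rc n a \<Longrightarrow> rc n b \<Longrightarrow> rp n (\<lambda>xs. a xs \<noteq> b xs)"
  using rp_not[OF rp_eq, of n a b] by simp

lemma rp_True[rci]: "rp n (\<lambda>xs. True)" unfolding rp_def by (simp add: rc_const)
lemma rp_False[rci]: "rp n (\<lambda>xs. False)" unfolding rp_def by (simp add: rc_const)

lemma rc_if[rci]: "rp n P \<Longrightarrow> rc n a \<Longrightarrow> rc n b \<Longrightarrow> rc n (\<lambda>xs. if P xs then a xs else b xs)"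
  unfolding rp_def
  by (rule rc_cong[where f="\<lambda>xs. (if P xs then 1 else 0) * a xs + (1 - (if P xs then 1 else 0)) * b xs"])
     (auto intro!: rci)

lemma rp_cong: "rp n P \<Longrightarrow> (\<And>xs. length xs = n \<Longrightarrow> P xs = Q xs) \<Longrightarrow> rp n Q"
  unfolding rp_def by (erule rc_cong) auto

lemma rp_bex:
  assumes Q: "rp (Suc n) Q" and a: "rc n a"
    and P: "\<And>xs. length xs = n \<Longrightarrow> P xs = (\<exists>i<a xs. Q (i#xs))"
  shows "rp n P"
proof -
  define H where "H = (\<lambda>ys. if \<exists>i<hd ys. Q (i # tl ys) then 1 else (0::nat))"
  have g: "rp (Suc (Suc n)) (\<lambda>zs. zs!1 \<noteq> 0 \<or> Q (hd zs # drop 2 zs))"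
    using Q unfolding rp_def
    by (intro rp_or[unfolded rp_def] rp_neq[unfolded rp_def] rc_proj rc_const rc_skip1) auto
  have "rc (Suc n) H"
  proof (rule rc_prim[where f="\<lambda>_. 0" and g="\<lambda>zs. if zs!1 \<noteq> 0 \<or> Q (hd zs # drop 2 zs) then 1 else 0"])
    show "rc n (\<lambda>_. 0)" by (rule rc_zero)
    show "rc (Suc (Suc n)) (\<lambda>zs. if zs!1 \<noteq> 0 \<or> Q (hd zs # drop 2 zs) then 1 else 0)"
      using g unfolding rp_def .
    show "H (0 # ys) = 0" for ys unfolding H_def by simp
    show "H (Suc k # ys) = (if (k # H (k # ys) # ys) ! 1 \<noteq> 0 \<or> Q (hd (k # H (k # ys) # ys) # drop 2 (k # H (k # ys) # ys)) then 1 else 0)" for k ys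
      unfolding H_def by (auto simp: less_Suc_eq)
  qed
  then have "rc n (\<lambda>xs. H (a xs # xs))" by (rule rc_comp_cons[OF _ a])
  then show ?thesis unfolding rp_def
    by (rule rc_cong) (simp add: H_def P)
qed

lemma rp_ball:
  assumes Q: "rp (Suc n) Q" and a: "rc n a"
    and P: "\<And>xs. length xs = n \<Longrightarrow> P xs = (\<forall>i<a xs. Q (i#xs))"
  shows "rp n P"
proof -
  have "rp n (\<lambda>xs. \<exists>i<a xs. \<not> Q (i#xs))"
    by (rule rp_bex[OF rp_not[OF Q] a]) simp
  from rp_not[OF this] show ?thesis
    by (rule rp_cong) (simp add: P)
qed

lemma rc_sum:
  assumes F: "rc (Suc n) F" and a: "rc n a"
    and G: "\<And>xs. length xs = n \<Longrightarrow> G xs = (\<Sum>i<a xs. F (i#xs))"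
  shows "rc n G"
proof -
  define H where "H = (\<lambda>ys. \<Sum>i<hd ys. F (i # tl ys))"
  have "rc (Suc n) H"
  proof (rule rc_prim[where f="\<lambda>_. 0" and g="\<lambda>zs. zs!1 + F (hd zs # drop 2 zs)"])
    show "rc n (\<lambda>_. 0)" by (rule rc_zero)
    show "rc (Suc (Suc n)) (\<lambda>zs. zs!1 + F (hd zs # drop 2 zs))"
      by (intro rc_add rc_proj rc_skip1 F) auto
    show "H (0 # ys) = 0" for ys unfolding H_def by simp
    show "H (Suc k # ys) = (k # H (k # ys) # ys) ! 1 + F (hd (k # H (k # ys) # ys) # drop 2 (k # H (k # ys) # ys))" for k ys
      unfolding H_def by simp
  qed
  then have "rc n (\<lambda>xs. H (a xs # xs))" by (rule rc_comp_cons[OF _ a])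
  then show ?thesis
    by (rule rc_cong) (simp add: H_def G)
qed

lemma rc_nat_if: "rp n P \<Longrightarrow> rc n (\<lambda>xs. if P xs then 1 else 0)" unfolding rp_def .



lemma rc_tri1: "rc 1 (\<lambda>xs. triangle (xs!0))"
proof -
  have "rc (Suc 0) (\<lambda>xs. triangle (xs!0))"
    by (rule rc_prim[where f="\<lambda>ys. 0" and g="\<lambda>zs. zs!1 + Suc (zs!0)"])
       (auto intro!: rc_proj rc_add rc_zero rc_Suc)
  then show ?thesis by simp
qed

lemma rc_pe[rci]: "rc n a \<Longrightarrow> rc n b \<Longrightarrow> rc n (\<lambda>xs. prod_encode (a xs, b xs))"
proof -
  assume a: "rc n a" and b: "rc n b"
  have "rc n (\<lambda>xs. triangle (a xs + b xs) + a xs)"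
    by (intro rc_add rc_comp1[OF rc_tri1, simplified] a b)
  then show ?thesis by (simp add: prod_encode_def)
qed

definition cfst :: "nat \<Rightarrow> nat" where "cfst z = fst (prod_decode z)"
definition csnd :: "nat \<Rightarrow> nat" where "csnd z = snd (prod_decode z)"

lemma cfst_pe[simp]: "cfst (prod_encode (a,b)) = a" by (simp add: cfst_def)
lemma csnd_pe[simp]: "csnd (prod_encode (a,b)) = b" by (simp add: csnd_def)
lemma pe_cfst_csnd: "prod_encode (cfst z, csnd z) = z" by (simp add: cfst_def csnd_def)
lemma cfst_le: "cfst z \<le> z" by (metis le_prod_encode_1 pe_cfst_csnd)
lemma csnd_le: "csnd z \<le> z" by (metis le_prod_encode_2 pe_cfst_csnd)

lemma cfst_sum: "cfst z = (\<Sum>a<Suc z. a * (if \<exists>b<Suc z. prod_encode (a,b) = z then 1 else 0))"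
proof -
  have eq: "(\<exists>b<Suc z. prod_encode (a,b) = z) \<longleftrightarrow> a = cfst z" for a
  proof
    assume "\<exists>b<Suc z. prod_encode (a,b) = z"
    then obtain b where "prod_encode (a,b) = z" by auto
    then show "a = cfst z" by auto
  next
    assume "a = cfst z"
    then show "\<exists>b<Suc z. prod_encode (a,b) = z"
      using pe_cfst_csnd[of z] csnd_le[of z] by (intro exI[of _ "csnd z"]) auto
  qed
  have "(\<Sum>a<Suc z. a * (if \<exists>b<Suc z. prod_encode (a,b) = z then 1 else 0)) = (\<Sum>a<Suc z. if a = cfst z then a else 0)"
    by (rule sum.cong) (auto simp: eq)
  also have "\<dots> = cfst z" using cfst_le[of z] by (simp add: sum.delta)
  finally show ?thesis by simp
qed

lemma csnd_sum: "csnd z = (\<Sum>b<Suc z. b * (if \<exists>a<Suc z. prod_encode (a,b) = z then 1 else 0))"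
proof -
  have eq: "(\<exists>a<Suc z. prod_encode (a,b) = z) \<longleftrightarrow> b = csnd z" for b
  proof
    assume "\<exists>a<Suc z. prod_encode (a,b) = z"
    then obtain a where "prod_encode (a,b) = z" by auto
    then show "b = csnd z" by auto
  next
    assume "b = csnd z"
    then show "\<exists>a<Suc z. prod_encode (a,b) = z"
      using pe_cfst_csnd[of z] cfst_le[of z] by (intro exI[of _ "cfst z"]) auto
  qed
  have "(\<Sum>b<Suc z. b * (if \<exists>a<Suc z. prod_encode (a,b) = z then 1 else 0)) = (\<Sum>b<Suc z. if b = csnd z then b else 0)"
    by (rule sum.cong) (auto simp: eq)
  also have "\<dots> = csnd z" using csnd_le[of z] by (simp add: sum.delta)
  finally show ?thesis by simp
qed

lemma rc_cfst1: "rc 1 (\<lambda>xs. cfst (xs!0))"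
proof (rule rc_sum[where F="\<lambda>ys. ys!0 * (if \<exists>b<Suc (ys!1). prod_encode (ys!0,b) = ys!1 then 1 else 0)" and a="\<lambda>xs. Suc (xs!0)"])
  show "rc (Suc 1) (\<lambda>ys. ys!0 * (if \<exists>b<Suc (ys!1). prod_encode (ys!0,b) = ys!1 then 1 else 0))"
  proof (intro rc_mult rc_proj rc_nat_if)
    show "rp (Suc 1) (\<lambda>ys. \<exists>b<Suc (ys!1). prod_encode (ys!0,b) = ys!1)"
      by (rule rp_bex[where Q="\<lambda>ws. prod_encode (ws!1, ws!0) = ws!2" and a="\<lambda>ys. Suc (ys!1)"])
         (auto intro!: rci rc_proj)
  qed simp
  show "rc 1 (\<lambda>xs. Suc (xs!0))" by (auto intro!: rci rc_proj)
  show "cfst (xs!0) = (\<Sum>i<Suc (xs!0). (i#xs)!0 * (if \<exists>b<Suc ((i#xs)!1). prod_encode ((i#xs)!0,b) = (i#xs)!1 then 1 else 0))" for xs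
    by (simp add: cfst_sum[of "xs!0"])
qed

lemma rc_csnd1: "rc 1 (\<lambda>xs. csnd (xs!0))"
proof (rule rc_sum[where F="\<lambda>ys. ys!0 * (if \<exists>a<Suc (ys!1). prod_encode (a,ys!0) = ys!1 then 1 else 0)" and a="\<lambda>xs. Suc (xs!0)"])
  show "rc (Suc 1) (\<lambda>ys. ys!0 * (if \<exists>a<Suc (ys!1). prod_encode (a,ys!0) = ys!1 then 1 else 0))"
  proof (intro rc_mult rc_proj rc_nat_if)
    show "rp (Suc 1) (\<lambda>ys. \<exists>a<Suc (ys!1). prod_encode (a,ys!0) = ys!1)"
      by (rule rp_bex[where Q="\<lambda>ws. prod_encode (ws!0, ws!1) = ws!2" and a="\<lambda>ys. Suc (ys!1)"])
         (auto intro!: rci rc_proj)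
  qed simp
  show "rc 1 (\<lambda>xs. Suc (xs!0))" by (auto intro!: rci rc_proj)
  show "csnd (xs!0) = (\<Sum>i<Suc (xs!0). (i#xs)!0 * (if \<exists>a<Suc ((i#xs)!1). prod_encode (a,(i#xs)!0) = (i#xs)!1 then 1 else 0))" for xs
    by (simp add: csnd_sum[of "xs!0"])
qed

lemma rc_cfst[rci]: "rc n a \<Longrightarrow> rc n (\<lambda>xs. cfst (a xs))"
  using rc_comp1[OF rc_cfst1] by simp
lemma rc_csnd[rci]: "rc n a \<Longrightarrow> rc n (\<lambda>xs. csnd (a xs))"
  using rc_comp1[OF rc_csnd1] by simp

definition ccons :: "nat \<Rightarrow> nat \<Rightarrow> nat" where "ccons a b = Suc (prod_encode (a,b))"
definition ctl :: "nat \<Rightarrow> nat" where "ctl c = (if c = 0 then 0 else csnd (c - 1))"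
definition chd :: "nat \<Rightarrow> nat" where "chd c = (if c = 0 then 0 else cfst (c - 1))"
definition cdrop :: "nat \<Rightarrow> nat \<Rightarrow> nat" where "cdrop i c = (ctl ^^ i) c"
definition cnth :: "nat \<Rightarrow> nat \<Rightarrow> nat" where "cnth c i = chd (cdrop i c)"
definition clen :: "nat \<Rightarrow> nat" where "clen c = (\<Sum>i<c. if cdrop i c \<noteq> 0 then 1 else 0)"

lemma rc_ccons[rci]: "rc n a \<Longrightarrow> rc n b \<Longrightarrow> rc n (\<lambda>xs. ccons (a xs) (b xs))"
  unfolding ccons_def by (intro rci)
lemma rc_ctl[rci]: "rc n a \<Longrightarrow> rc n (\<lambda>xs. ctl (a xs))"
  unfolding ctl_def by (intro rci)
lemma rc_chd[rci]: "rc n a \<Longrightarrow> rc n (\<lambda>xs. chd (a xs))"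
  unfolding chd_def by (intro rci)

lemma rc_cdrop2: "rc 2 (\<lambda>xs. cdrop (xs!0) (xs!1))"
proof -
  have "rc (Suc 1) (\<lambda>xs. cdrop (xs!0) (xs!1))"
    by (rule rc_prim[where f="\<lambda>ys. ys!0" and g="\<lambda>zs. ctl (zs!1)"])
       (auto intro!: rc_proj rc_ctl simp: cdrop_def)
  then show ?thesis by (simp add: numeral_2_eq_2)
qed
lemma rc_cdrop[rci]: "rc n a \<Longrightarrow> rc n b \<Longrightarrow> rc n (\<lambda>xs. cdrop (a xs) (b xs))"
  using rc_comp2[OF rc_cdrop2] by simp
lemma rc_cnth[rci]: "rc n a \<Longrightarrow> rc n b \<Longrightarrow> rc n (\<lambda>xs. cnth (a xs) (b xs))"
  unfolding cnth_def by (intro rci)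

lemma rc_clen1: "rc 1 (\<lambda>xs. clen (xs!0))"
  by (rule rc_sum[where F="\<lambda>ys. if cdrop (ys!0) (ys!1) \<noteq> 0 then 1 else 0" and a="\<lambda>xs. xs!0"])
     (auto intro!: rci rc_proj simp: clen_def)
lemma rc_clen[rci]: "rc n a \<Longrightarrow> rc n (\<lambda>xs. clen (a xs))"
  using rc_comp1[OF rc_clen1] by simp

lemma ccons_le: "ccons x (list_encode xs) = list_encode (x#xs)" by (simp add: ccons_def)
lemma ctl_le[simp]: "ctl (list_encode (x#xs)) = list_encode xs" by (simp add: ctl_def)
lemma chd_le[simp]: "chd (list_encode (x#xs)) = x" by (simp add: chd_def)
lemma ctl_0[simp]: "ctl 0 = 0" by (simp add: ctl_def)
lemma cdrop_le: "cdrop i (list_encode xs) = list_encode (drop i xs)"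
proof (induction i arbitrary: xs)
  case 0 then show ?case by (simp add: cdrop_def)
next
  case (Suc i)
  have "cdrop (Suc i) (list_encode xs) = cdrop i (ctl (list_encode xs))"
    by (simp only: cdrop_def funpow_Suc_right comp_def)
  also have "ctl (list_encode xs) = list_encode (tl xs)" by (cases xs) (auto simp: ctl_def)
  finally show ?case using Suc by (simp add: drop_Suc)
qed
lemma cnth_le[simp]: "i < length xs \<Longrightarrow> cnth (list_encode xs) i = xs ! i"
  by (simp add: cnth_def cdrop_le Cons_nth_drop_Suc[symmetric] chd_def)

lemma length_le_le: "length xs \<le> list_encode xs"
  by (induction xs) (auto intro: le_trans[OF _ le_prod_encode_2] simp del: list_encode.simps(2) simp: list_encode.simps(2) Suc_le_mono)

lemma mem_lt_le: "x \<in> set xs \<Longrightarrow> x < list_encode xs"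
proof (induction xs)
  case Nil then show ?case by simp
next
  case (Cons y ys)
  have "y < list_encode (y#ys)" "list_encode ys < list_encode (y#ys)"
    using le_prod_encode_1[of y "list_encode ys"] le_prod_encode_2[of "list_encode ys" y] by auto
  then show ?case using Cons by auto
qed

lemma clen_le[simp]: "clen (list_encode xs) = length xs"
proof -
  have "clen (list_encode xs) = (\<Sum>i<list_encode xs. if i < length xs then 1 else 0)"
    unfolding clen_def by (rule sum.cong) (auto simp: cdrop_le list_encode_eq[where y="[]", simplified])
  also have "\<dots> = card {i. i < list_encode xs \<and> i < length xs}"
    by (simp add: sum.If_cases Int_def)
  also have "{i. i < list_encode xs \<and> i < length xs} = {..<length xs}"
    using length_le_le[of xs] by auto
  finally show ?thesis by simp
qed



primrec enc :: "recf \<Rightarrow> nat" where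
  "enc Zr = prod_encode (0,0)"
| "enc Sc = prod_encode (1,0)"
| "enc (Proj i) = prod_encode (2,i)"
| "enc (Cn f gs) = prod_encode (3, prod_encode (enc f, list_encode (map enc gs)))"
| "enc (Pr f g) = prod_encode (4, prod_encode (enc f, enc g))"
| "enc (Mn f) = prod_encode (5, enc f)"

lemma triangle_ge: "n \<le> triangle n" by (induction n) auto

lemma csnd_less': "0 < cfst c \<Longrightarrow> csnd c < c"
proof -
  assume "0 < cfst c"
  have "c = triangle (cfst c + csnd c) + cfst c" using pe_cfst_csnd[of c] by (simp add: prod_encode_def)
  moreover have "cfst c + csnd c \<le> triangle (cfst c + csnd c)" by (rule triangle_ge)
  ultimately show ?thesis using \<open>0 < cfst c\<close> by linarith
qed

function dec :: "nat \<Rightarrow> recf" where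
  "dec c = (if cfst c = 1 then Sc
     else if cfst c = 2 then Proj (csnd c)
     else if cfst c = 3 then Cn (dec (cfst (csnd c))) (map dec (list_decode (csnd (csnd c))))
     else if cfst c = 4 then Pr (dec (cfst (csnd c))) (dec (csnd (csnd c)))
     else if cfst c = 5 then Mn (dec (csnd c))
     else Zr)"
  by pat_completeness auto

lemma mem_list_decode_less: "x \<in> set (list_decode n) \<Longrightarrow> x < n"
  using mem_lt_le[of x "list_decode n"] by simp

termination
proof (relation "measure id")
  fix c x
  assume "\<not> cfst c = 1" "\<not> cfst c = 2" "cfst c = 3" "x \<in> set (list_decode (csnd (csnd c)))"
  then show "(x, c) \<in> measure id"
    using mem_list_decode_less[of x] csnd_le[of "csnd c"] csnd_less'[of c] by force
qed (auto intro: le_less_trans[OF cfst_le csnd_less'] le_less_trans[OF csnd_le csnd_less'] csnd_less')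

declare dec.simps[simp del]

lemma dec_enc[simp]: "dec (enc f) = f"
  by (induction f) (subst dec.simps, simp add: map_idI)+



definition c2 :: "nat \<Rightarrow> nat" where "c2 j = cfst (csnd j)"
definition c3 :: "nat \<Rightarrow> nat" where "c3 j = csnd (csnd j)"
definition trip :: "nat \<Rightarrow> nat \<Rightarrow> nat \<Rightarrow> nat" where "trip a b c = prod_encode (a, prod_encode (b, c))"

lemma trip_simps[simp]: "cfst (trip a b c) = a" "c2 (trip a b c) = b" "c3 (trip a b c) = c"
  by (simp_all add: trip_def c2_def c3_def)
lemma trip_eq[simp]: "trip a b c = trip a' b' c' \<longleftrightarrow> a = a' \<and> b = b' \<and> c = c'"
  by (simp add: trip_def)
lemma trip_parts: "trip (cfst j) (c2 j) (c3 j) = j"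
  by (simp add: trip_def c2_def c3_def pe_cfst_csnd)

definition JJ :: "nat \<Rightarrow> nat set \<Rightarrow> bool" where
"JJ j S = (let c = cfst j; cx = c2 j; y = c3 j; t = cfst c; d = csnd c in
  if t = 1 then cx \<noteq> 0 \<and> y = Suc (chd cx)
  else if t = 2 then d < clen cx \<and> y = cnth cx d
  else if t = 3 then (\<exists>j'\<in>S. cfst j' = cfst d \<and> c3 j' = y \<and> clen (c2 j') = clen (csnd d) \<and>
          (\<forall>r<clen (csnd d). trip (cnth (csnd d) r) cx (cnth (c2 j') r) \<in> S))
  else if t = 4 then cx \<noteq> 0 \<and> (if chd cx = 0 then trip (cfst d) (ctl cx) y \<in> S
          else (\<exists>j'\<in>S. cfst j' = c \<and> c2 j' = ccons (chd cx - 1) (ctl cx) \<and>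
                 trip (csnd d) (ccons (chd cx - 1) (ccons (c3 j') (ctl cx))) y \<in> S))
  else if t = 5 then trip d (ccons y cx) 0 \<in> S \<and> (\<forall>m<y. \<exists>j'\<in>S. cfst j' = d \<and> c2 j' = ccons m cx \<and> c3 j' \<noteq> 0)
  else y = 0)"

lemma JJ_mono: "JJ j S \<Longrightarrow> S \<subseteq> S' \<Longrightarrow> JJ j S'"
  unfolding JJ_def Let_def
  by (simp split: if_splits; blast)

definition validL :: "nat list \<Rightarrow> bool" where
  "validL L \<longleftrightarrow> (\<forall>i<length L. JJ (L!i) (set (take i L)))"

lemma validL_Nil[simp]: "validL []" by (simp add: validL_def)

lemma validL_append: "validL A \<Longrightarrow> validL B \<Longrightarrow> validL (A @ B)"
  unfolding validL_def
proof (intro allI impI)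
  fix i assume A: "\<forall>i<length A. JJ (A ! i) (set (take i A))" and B: "\<forall>i<length B. JJ (B ! i) (set (take i B))"
    and i: "i < length (A @ B)"
  show "JJ ((A @ B) ! i) (set (take i (A @ B)))"
  proof (cases "i < length A")
    case True then show ?thesis using A by (simp add: nth_append)
  next
    case False
    then have "JJ (B ! (i - length A)) (set (take (i - length A) B))" using B i by auto
    then show ?thesis using False by (auto simp: nth_append intro: JJ_mono)
  qed
qed

lemma validL_snoc: "validL A \<Longrightarrow> JJ j (set A) \<Longrightarrow> validL (A @ [j])"
  unfolding validL_def by (auto simp: nth_append less_Suc_eq)

definition sem :: "nat \<Rightarrow> bool" where
  "sem j \<longleftrightarrow> eval (dec (cfst j)) (list_decode (c2 j)) (c3 j)"

lemma list_decode_nonzero: "n \<noteq> 0 \<Longrightarrow> list_decode n = chd n # list_decode (ctl n)"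
  by (cases n) (auto simp: chd_def ctl_def cfst_def csnd_def split: prod.splits)

lemma sound_step:
  assumes J: "JJ j S" and IH: "\<forall>j'\<in>S. sem j'"
  shows "sem j"
proof -
  define c cx y t d where "c = cfst j" "cx = c2 j" "y = c3 j" "t = cfst c" "d = csnd c"
  note defs = this
  define xs where "xs = list_decode cx"
  have cx: "cx = list_encode xs" by (simp add: xs_def)
  have S: "trip a b e \<in> S \<Longrightarrow> eval (dec a) (list_decode b) e" for a b e
    using IH by (force simp: sem_def)
  have S': "j' \<in> S \<Longrightarrow> eval (dec (cfst j')) (list_decode (c2 j')) (c3 j')" for j'
    using IH by (simp add: sem_def)
  show ?thesis
  proof (cases "t = 1")
    case True
    then have "dec c = Sc" using defs by (subst dec.simps) simp
    moreover have "cx \<noteq> 0 \<and> y = Suc (chd cx)" using J True unfolding JJ_def defs[symmetric] Let_def by simp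
    ultimately show ?thesis unfolding sem_def defs[symmetric]
      by (simp add: list_decode_nonzero eval.intros)
  next
    case t1: False
    show ?thesis
    proof (cases "t = 2")
      case True
      then have "dec c = Proj d" using defs t1 by (subst dec.simps) simp
      moreover have "d < clen cx \<and> y = cnth cx d" using J True unfolding JJ_def defs[symmetric] Let_def by simp
      ultimately show ?thesis unfolding sem_def defs[symmetric] using cx
        by (auto intro: eval.intros)
    next
      case t2: False
      show ?thesis
      proof (cases "t = 3")
        case True
        define gl where "gl = list_decode (csnd d)"
        have gl: "csnd d = list_encode gl" by (simp add: gl_def)
        have dc: "dec c = Cn (dec (cfst d)) (map dec gl)" using defs t1 t2 True gl_def by (subst dec.simps) simp
        from J True t1 t2 obtain j' where j': "j' \<in> S" "cfst j' = cfst d" "c3 j' = y" "clen (c2 j') = clen (csnd d)"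
          "\<forall>r<clen (csnd d). trip (cnth (csnd d) r) cx (cnth (c2 j') r) \<in> S"
          unfolding JJ_def defs[symmetric] Let_def by auto
        define ys where "ys = list_decode (c2 j')"
        have ys: "c2 j' = list_encode ys" by (simp add: ys_def)
        have len: "length ys = length gl" using j'(4) by (simp add: ys gl)
        have prem: "eval (dec (gl!r)) xs (ys!r)" if "r < length gl" for r
          using S[OF j'(5)[rule_format, of r]] that len by (simp add: gl ys cx[symmetric] xs_def)
        have "list_all2 (\<lambda>g y. eval g xs y) (map dec gl) ys"
          using len prem by (auto simp: list_all2_conv_all_nth)
        moreover have "eval (dec (cfst d)) ys y" using S'[OF j'(1)] j'(2,3) by (simp add: ys_def)
        ultimately show ?thesis unfolding sem_def defs[symmetric] dc xs_def[symmetric]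
          by (rule eval_Cn)
      next
        case t3: False
        show ?thesis
        proof (cases "t = 4")
          case True
          have dc: "dec c = Pr (dec (cfst d)) (dec (csnd d))" using defs t1 t2 t3 True by (subst dec.simps) simp
          from J True t1 t2 t3 have cx0: "cx \<noteq> 0" and
            J4: "if chd cx = 0 then trip (cfst d) (ctl cx) y \<in> S
              else (\<exists>j'\<in>S. cfst j' = c \<and> c2 j' = ccons (chd cx - 1) (ctl cx) \<and>
                 trip (csnd d) (ccons (chd cx - 1) (ccons (c3 j') (ctl cx))) y \<in> S)"
            unfolding JJ_def defs[symmetric] Let_def by auto
          have xs: "xs = chd cx # list_decode (ctl cx)" using cx0 by (simp add: xs_def list_decode_nonzero)
          show ?thesis
          proof (cases "chd cx = 0")
            case True
            then have "eval (dec (cfst d)) (list_decode (ctl cx)) y" using J4 S by simp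
            then show ?thesis unfolding sem_def defs[symmetric] dc xs_def[symmetric] xs True
              by (rule eval_Pr0)
          next
            case False
            then obtain j' where j': "j' \<in> S" "cfst j' = c" "c2 j' = ccons (chd cx - 1) (ctl cx)"
              "trip (csnd d) (ccons (chd cx - 1) (ccons (c3 j') (ctl cx))) y \<in> S" using J4 by auto
            have e1: "eval (Pr (dec (cfst d)) (dec (csnd d))) ((chd cx - 1) # list_decode (ctl cx)) (c3 j')"
              using S'[OF j'(1)] j'(2,3) dc by (simp add: ccons_def)
            have e2: "eval (dec (csnd d)) ((chd cx - 1) # c3 j' # list_decode (ctl cx)) y"
              using S[OF j'(4)] by (simp add: ccons_def)
            have "Suc (chd cx - 1) = chd cx" using False by simp
            then show ?thesis unfolding sem_def defs[symmetric] dc xs_def[symmetric] xs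
              using eval_PrS[OF e1 e2] by simp
          qed
        next
          case t4: False
          show ?thesis
          proof (cases "t = 5")
            case True
            have dc: "dec c = Mn (dec d)" using defs t1 t2 t3 t4 True by (subst dec.simps) simp
            from J True t1 t2 t3 t4 have a: "trip d (ccons y cx) 0 \<in> S"
              and b: "\<forall>m<y. \<exists>j'\<in>S. cfst j' = d \<and> c2 j' = ccons m cx \<and> c3 j' \<noteq> 0"
              unfolding JJ_def defs[symmetric] Let_def by auto
            have "eval (dec d) (y # xs) 0" using S[OF a] by (simp add: ccons_def cx)
            moreover have "\<forall>m<y. \<exists>z. eval (dec d) (m # xs) (Suc z)"
            proof (intro allI impI)
              fix m assume "m < y"
              then obtain j' where "j' \<in> S" "cfst j' = d" "c2 j' = ccons m cx" "c3 j' \<noteq> 0" using b by auto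
              then have "eval (dec d) (m # xs) (Suc (c3 j' - 1))"
                using S'[of j'] by (simp add: ccons_def cx)
              then show "\<exists>z. eval (dec d) (m # xs) (Suc z)" by blast
            qed
            ultimately show ?thesis unfolding sem_def defs[symmetric] dc xs_def[symmetric]
              by (rule eval_Mn)
          next
            case t5: False
            have dc: "dec c = Zr" using defs t1 t2 t3 t4 t5 by (subst dec.simps) simp
            have "y = 0" using J t1 t2 t3 t4 t5 unfolding JJ_def defs[symmetric] Let_def by simp
            then show ?thesis unfolding sem_def defs[symmetric] dc by (simp add: eval.intros)
          qed
        qed
      qed
    qed
  qed
qed

lemma validL_sound: "validL L \<Longrightarrow> j \<in> set L \<Longrightarrow> sem j"
proof -
  assume v: "validL L"
  have "\<forall>j\<in>set (take i L). sem j" for i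
  proof (induction i)
    case 0 then show ?case by simp
  next
    case (Suc i)
    show ?case
    proof (cases "i < length L")
      case True
      then have "take (Suc i) L = take i L @ [L!i]" by (simp add: take_Suc_conv_app_nth)
      moreover have "sem (L!i)" using v True Suc sound_step unfolding validL_def by blast
      ultimately show ?thesis using Suc by simp
    next
      case False then show ?thesis using Suc by simp
    qed
  qed
  then show "j \<in> set L \<Longrightarrow> sem j" by (metis take_all order_refl)
qed



abbreviation jd :: "recf \<Rightarrow> nat list \<Rightarrow> nat \<Rightarrow> nat" where
  "jd f xs y \<equiv> trip (enc f) (list_encode xs) y"

lemma cfst_enc[simp]:
  "cfst (enc Zr) = 0" "cfst (enc Sc) = 1" "cfst (enc (Proj i)) = 2" "cfst (enc (Cn f gs)) = 3"
  "cfst (enc (Pr f g)) = 4" "cfst (enc (Mn f)) = 5"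
  "csnd (enc (Proj i)) = i" "csnd (enc (Cn f gs)) = prod_encode (enc f, list_encode (map enc gs))"
  "csnd (enc (Pr f g)) = prod_encode (enc f, enc g)" "csnd (enc (Mn f)) = enc f"
  by simp_all

declare enc.simps[simp del]

lemma chd_Suc_pe[simp]: "chd (Suc (prod_encode (a,b))) = a" by (simp add: chd_def)
lemma ctl_Suc_pe[simp]: "ctl (Suc (prod_encode (a,b))) = b" by (simp add: ctl_def)

lemma JJ_jd: "JJ (trip (enc f) cx y) S = (let c = enc f; t = cfst c; d = csnd c in
  if t = 1 then cx \<noteq> 0 \<and> y = Suc (chd cx)
  else if t = 2 then d < clen cx \<and> y = cnth cx d
  else if t = 3 then (\<exists>j'\<in>S. cfst j' = cfst d \<and> c3 j' = y \<and> clen (c2 j') = clen (csnd d) \<and>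
          (\<forall>r<clen (csnd d). trip (cnth (csnd d) r) cx (cnth (c2 j') r) \<in> S))
  else if t = 4 then cx \<noteq> 0 \<and> (if chd cx = 0 then trip (cfst d) (ctl cx) y \<in> S
          else (\<exists>j'\<in>S. cfst j' = c \<and> c2 j' = ccons (chd cx - 1) (ctl cx) \<and>
                 trip (csnd d) (ccons (chd cx - 1) (ccons (c3 j') (ctl cx))) y \<in> S))
  else if t = 5 then trip d (ccons y cx) 0 \<in> S \<and> (\<forall>m<y. \<exists>j'\<in>S. cfst j' = d \<and> c2 j' = ccons m cx \<and> c3 j' \<noteq> 0)
  else y = 0)"
  unfolding JJ_def by simp

lemma collect_list:
  assumes "list_all2 (\<lambda>g y. \<exists>L. validL L \<and> jd g xs y \<in> set L) gs ys"
  shows "\<exists>L. validL L \<and> (\<forall>r<length gs. jd (gs!r) xs (ys!r) \<in> set L)"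
  using assms
proof (induction rule: list_all2_induct)
  case Nil then show ?case by (intro exI[of _ "[]"]) simp
next
  case (Cons g gs y ys)
  then obtain L1 L2 where "validL L1" "jd g xs y \<in> set L1" "validL L2" "\<forall>r<length gs. jd (gs!r) xs (ys!r) \<in> set L2"
    by blast
  then show ?case
    by (intro exI[of _ "L1 @ L2"]) (auto simp: validL_append nth_Cons' less_Suc_eq_0_disj)
qed

lemma collect_mn:
  assumes "\<forall>m<n. \<exists>z L. validL L \<and> jd f (m # xs) (Suc z) \<in> set L"
  shows "\<exists>L. validL L \<and> (\<forall>m<n. \<exists>z. jd f (m # xs) (Suc z) \<in> set L)"
  using assms
proof (induction n)
  case 0 then show ?case by (intro exI[of _ "[]"]) simp
next
  case (Suc n)
  then obtain L1 where L1: "validL L1" "\<forall>m<n. \<exists>z. jd f (m # xs) (Suc z) \<in> set L1" by auto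
  from Suc.prems obtain z L2 where L2: "validL L2" "jd f (n # xs) (Suc z) \<in> set L2" by blast
  show ?case
    by (rule exI[of _ "L1 @ L2"]) (use L1 L2 in \<open>auto simp: validL_append less_Suc_eq\<close>)
qed

lemma complete: "eval f xs y \<Longrightarrow> \<exists>L. validL L \<and> jd f xs y \<in> set L"
proof (induction rule: eval.induct)
  case (eval_Zr xs)
  show ?case by (rule exI[of _ "[jd Zr xs 0]"]) (simp add: validL_def JJ_jd)
next
  case (eval_Sc x xs)
  show ?case by (rule exI[of _ "[jd Sc (x#xs) (Suc x)]"]) (simp add: validL_def JJ_jd chd_def)
next
  case (eval_Proj i xs)
  show ?case by (rule exI[of _ "[jd (Proj i) xs (xs!i)]"]) (use eval_Proj in \<open>simp add: validL_def JJ_jd\<close>)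
next
  case (eval_Cn xs gs ys f z)
  have "list_all2 (\<lambda>g y. \<exists>L. validL L \<and> jd g xs y \<in> set L) gs ys"
    using eval_Cn.IH(1) by (rule list_all2_mono) auto
  from collect_list[OF this] obtain L1 where L1: "validL L1" "\<forall>r<length gs. jd (gs!r) xs (ys!r) \<in> set L1" by blast
  from eval_Cn.IH(2) obtain L2 where L2: "validL L2" "jd f ys z \<in> set L2" by blast
  have len: "length ys = length gs" using eval_Cn(1) by (simp add: list_all2_lengthD)
  have "JJ (jd (Cn f gs) xs z) (set (L1 @ L2))"
    unfolding JJ_jd Let_def
    using L1 L2 len by (auto intro!: bexI[of _ "jd f ys z"])
  then have "validL ((L1 @ L2) @ [jd (Cn f gs) xs z])"
    using L1 L2 by (intro validL_snoc validL_append)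
  then show ?case by (intro exI) auto
next
  case (eval_Pr0 f xs y g)
  then obtain L where L: "validL L" "jd f xs y \<in> set L" by blast
  have "JJ (jd (Pr f g) (0#xs) y) (set L)" unfolding JJ_jd Let_def using L by (simp add: ccons_def)
  then have "validL (L @ [jd (Pr f g) (0#xs) y])" using L by (intro validL_snoc)
  then show ?case by (intro exI) auto
next
  case (eval_PrS f g n xs y z)
  then obtain L1 L2 where L: "validL L1" "jd (Pr f g) (n#xs) y \<in> set L1" "validL L2" "jd g (n # y # xs) z \<in> set L2"
    by blast
  have "JJ (jd (Pr f g) (Suc n#xs) z) (set (L1 @ L2))" unfolding JJ_jd Let_def using L
    by (auto simp: ccons_def intro!: bexI[of _ "jd (Pr f g) (n#xs) y"])
  then have "validL ((L1 @ L2) @ [jd (Pr f g) (Suc n#xs) z])" using L by (intro validL_snoc validL_append)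
  then show ?case by (intro exI) auto
next
  case (eval_Mn f n xs)
  then obtain L1 where L1: "validL L1" "jd f (n#xs) 0 \<in> set L1" by blast
  have "\<forall>m<n. \<exists>z L. validL L \<and> jd f (m # xs) (Suc z) \<in> set L" using eval_Mn(3) by blast
  from collect_mn[OF this] obtain L2 where L2: "validL L2" "\<forall>m<n. \<exists>z. jd f (m # xs) (Suc z) \<in> set L2" by blast
  have a: "trip (enc f) (ccons n (list_encode xs)) 0 \<in> set (L1 @ L2)" using L1 by (simp add: ccons_le)
  have b: "\<forall>m<n. \<exists>j'\<in>set (L1 @ L2). cfst j' = enc f \<and> c2 j' = ccons m (list_encode xs) \<and> c3 j' \<noteq> 0"
  proof (intro allI impI)
    fix m assume "m < n"
    then obtain z where "jd f (m # xs) (Suc z) \<in> set L2" using L2 by blast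
    then show "\<exists>j'\<in>set (L1 @ L2). cfst j' = enc f \<and> c2 j' = ccons m (list_encode xs) \<and> c3 j' \<noteq> 0"
      by (intro bexI[of _ "jd f (m # xs) (Suc z)"]) (auto simp: ccons_le)
  qed
  have "JJ (jd (Mn f) xs n) (set (L1 @ L2))" unfolding JJ_jd Let_def using a b by simp
  then have "validL ((L1 @ L2) @ [jd (Mn f) xs n])" using L1 L2 by (intro validL_snoc validL_append)
  then show ?case by (intro exI) auto
qed

lemma eval_det: "eval f xs y \<Longrightarrow> eval f xs z \<Longrightarrow> y = z"
proof (induction arbitrary: z rule: eval.induct)
  case (eval_Zr xs) then show ?case by (cases rule: eval.cases) auto
next
  case (eval_Sc x xs) then show ?case by (cases rule: eval.cases) auto
next
  case (eval_Proj i xs) from eval_Proj.prems show ?case by (cases rule: eval.cases) auto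
next
  case (eval_Cn xs gs ys f z z')
  from eval_Cn.prems obtain ys' where ys': "list_all2 (\<lambda>g y. eval g xs y) gs ys'" "eval f ys' z'"
    by (cases rule: eval.cases) auto
  have "ys = ys'"
    using eval_Cn(1) ys'(1)
    by (auto simp: list_all2_conv_all_nth intro!: nth_equalityI)
  then show ?case using eval_Cn.IH(2)[of z'] ys'(2) by simp
next
  case (eval_Pr0 f xs y g z)
  from eval_Pr0.prems show ?case by (cases rule: eval.cases) (use eval_Pr0 in auto)
next
  case (eval_PrS f g n xs y z z')
  from eval_PrS.prems obtain y' where "eval (Pr f g) (n # xs) y'" "eval g (n # y' # xs) z'"
    by (cases rule: eval.cases) auto
  then show ?case using eval_PrS by metis
next
  case (eval_Mn f n xs z)
  from eval_Mn.prems have z: "eval f (z # xs) 0" "\<forall>m<z. \<exists>y. eval f (m # xs) (Suc y)"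
    by (cases rule: eval.cases; fastforce)+
  show ?case
  proof (rule ccontr)
    assume "n \<noteq> z"
    then consider "n < z" | "z < n" by linarith
    then show False
    proof cases
      case 1
      then obtain y where "eval f (n # xs) (Suc y)" using z by blast
      then show False using eval_Mn(2) by fastforce
    next
      case 2
      then obtain y where "eval f (z # xs) (Suc y)" "\<forall>w. eval f (z # xs) (Suc y) \<longrightarrow> True"
        using eval_Mn(3) by blast
      have "\<exists>y. eval f (z # xs) (Suc y) \<and> (\<forall>w. eval f (z # xs) w \<longrightarrow> Suc y = w)"
        using eval_Mn(3) 2 by blast
      then show False using z(1) by fastforce
    qed
  qed
qed



lemma rp_comp1: "rp 1 (\<lambda>xs. P (xs!0)) \<Longrightarrow> rc n a \<Longrightarrow> rp n (\<lambda>xs. P (a xs))"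
  unfolding rp_def using rc_comp1 by fastforce
lemma rp_comp3: "rp 3 (\<lambda>xs. P (xs!0) (xs!1) (xs!2)) \<Longrightarrow> rc n a \<Longrightarrow> rc n b \<Longrightarrow> rc n c \<Longrightarrow> rp n (\<lambda>xs. P (a xs) (b xs) (c xs))"
  unfolding rp_def using rc_comp3 by fastforce
lemma rc_compL: "rc m h \<Longrightarrow> length gs = m \<Longrightarrow> \<forall>g\<in>set gs. rc n g \<Longrightarrow> (\<And>xs. length xs = n \<Longrightarrow> h (map (\<lambda>g. g xs) gs) = G xs) \<Longrightarrow> rc n G"
  by (rule rc_cong[OF rc_comp]) auto

lemma rp_if[rci]: "rp n C \<Longrightarrow> rp n A \<Longrightarrow> rp n B \<Longrightarrow> rp n (\<lambda>xs. if C xs then A xs else B xs)"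
  unfolding rp_def by (rule rc_cong[OF rc_if[of n C "\<lambda>xs. if A xs then 1 else 0" "\<lambda>xs. if B xs then 1 else 0"]]) (auto simp: rp_def)

lemma rc_trip[rci]: "rc n a \<Longrightarrow> rc n b \<Longrightarrow> rc n c \<Longrightarrow> rc n (\<lambda>xs. trip (a xs) (b xs) (c xs))"
  unfolding trip_def by (intro rci)
lemma rc_c2[rci]: "rc n a \<Longrightarrow> rc n (\<lambda>xs. c2 (a xs))"
  unfolding c2_def by (intro rci)
lemma rc_c3[rci]: "rc n a \<Longrightarrow> rc n (\<lambda>xs. c3 (a xs))"
  unfolding c3_def by (intro rci)

definition memb :: "nat \<Rightarrow> nat \<Rightarrow> nat \<Rightarrow> bool" where
  "memb P i x \<longleftrightarrow> (\<exists>i'<i. x = cnth P i')"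

lemma rp_memb3: "rp 3 (\<lambda>xs. memb (xs!0) (xs!1) (xs!2))"
  by (rule rp_bex[where Q="\<lambda>ws. ws!3 = cnth (ws!1) (ws!0)" and a="\<lambda>xs. xs!1"])
     (auto intro!: rci rc_proj simp: memb_def)

lemma rp_memb[rci]: "rc n a \<Longrightarrow> rc n b \<Longrightarrow> rc n c \<Longrightarrow> rp n (\<lambda>xs. memb (a xs) (b xs) (c xs))"
  by (rule rp_comp3[OF rp_memb3])

definition cnok :: "nat \<Rightarrow> nat \<Rightarrow> nat \<Rightarrow> nat \<Rightarrow> nat \<Rightarrow> bool" where
  "cnok P i cx ys gs \<longleftrightarrow> (\<forall>r<clen gs. memb P i (trip (cnth gs r) cx (cnth ys r)))"

lemma rp_cnok5: "rp 5 (\<lambda>xs. cnok (xs!0) (xs!1) (xs!2) (xs!3) (xs!4))"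
  by (rule rp_ball[where Q="\<lambda>ws. memb (ws!1) (ws!2) (trip (cnth (ws!5) (ws!0)) (ws!3) (cnth (ws!4) (ws!0)))" and a="\<lambda>xs. clen (xs!4)"])
     (auto intro!: rci rc_proj simp: cnok_def)

lemma rp_cnok[rci]: "rc n a \<Longrightarrow> rc n b \<Longrightarrow> rc n c \<Longrightarrow> rc n d \<Longrightarrow> rc n e \<Longrightarrow> rp n (\<lambda>xs. cnok (a xs) (b xs) (c xs) (d xs) (e xs))"
  unfolding rp_def
  by (rule rc_compL[OF rp_cnok5[unfolded rp_def], of "[a,b,c,d,e]"]) (auto simp: eval_nat_numeral)

definition cnex :: "nat \<Rightarrow> nat \<Rightarrow> nat \<Rightarrow> nat \<Rightarrow> nat \<Rightarrow> nat \<Rightarrow> bool" where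
  "cnex P i y f gs cx \<longleftrightarrow> (\<exists>i'<i. cfst (cnth P i') = f \<and> c3 (cnth P i') = y \<and> clen (c2 (cnth P i')) = clen gs \<and> cnok P i cx (c2 (cnth P i')) gs)"

lemma rp_cnex6: "rp 6 (\<lambda>xs. cnex (xs!0) (xs!1) (xs!2) (xs!3) (xs!4) (xs!5))"
  by (rule rp_bex[where Q="\<lambda>ws. cfst (cnth (ws!1) (ws!0)) = ws!4 \<and> c3 (cnth (ws!1) (ws!0)) = ws!3 \<and> clen (c2 (cnth (ws!1) (ws!0))) = clen (ws!5) \<and> cnok (ws!1) (ws!2) (ws!6) (c2 (cnth (ws!1) (ws!0))) (ws!5)" and a="\<lambda>xs. xs!1"])
     (auto intro!: rci rc_proj simp: cnex_def)

lemma rp_cnex[rci]: "rc n a \<Longrightarrow> rc n b \<Longrightarrow> rc n c \<Longrightarrow> rc n d \<Longrightarrow> rc n e \<Longrightarrow> rc n f \<Longrightarrow> rp n (\<lambda>xs. cnex (a xs) (b xs) (c xs) (d xs) (e xs) (f xs))"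
  unfolding rp_def
  by (rule rc_compL[OF rp_cnex6[unfolded rp_def], of "[a,b,c,d,e,f]"]) (auto simp: eval_nat_numeral)

definition prex :: "nat \<Rightarrow> nat \<Rightarrow> nat \<Rightarrow> nat \<Rightarrow> nat \<Rightarrow> nat \<Rightarrow> bool" where
  "prex P i c cx y g \<longleftrightarrow> (\<exists>i'<i. cfst (cnth P i') = c \<and> c2 (cnth P i') = ccons (chd cx - 1) (ctl cx) \<and>
      memb P i (trip g (ccons (chd cx - 1) (ccons (c3 (cnth P i')) (ctl cx))) y))"

lemma rp_prex6: "rp 6 (\<lambda>xs. prex (xs!0) (xs!1) (xs!2) (xs!3) (xs!4) (xs!5))"
  by (rule rp_bex[where Q="\<lambda>ws. cfst (cnth (ws!1) (ws!0)) = ws!3 \<and> c2 (cnth (ws!1) (ws!0)) = ccons (chd (ws!4) - 1) (ctl (ws!4)) \<and>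
      memb (ws!1) (ws!2) (trip (ws!6) (ccons (chd (ws!4) - 1) (ccons (c3 (cnth (ws!1) (ws!0))) (ctl (ws!4)))) (ws!5))" and a="\<lambda>xs. xs!1"])
     (auto intro!: rci rc_proj simp: prex_def)

lemma rp_prex[rci]: "rc n a \<Longrightarrow> rc n b \<Longrightarrow> rc n c \<Longrightarrow> rc n d \<Longrightarrow> rc n e \<Longrightarrow> rc n f \<Longrightarrow> rp n (\<lambda>xs. prex (a xs) (b xs) (c xs) (d xs) (e xs) (f xs))"
  unfolding rp_def
  by (rule rc_compL[OF rp_prex6[unfolded rp_def], of "[a,b,c,d,e,f]"]) (auto simp: eval_nat_numeral)

definition mnex :: "nat \<Rightarrow> nat \<Rightarrow> nat \<Rightarrow> nat \<Rightarrow> nat \<Rightarrow> bool" where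
  "mnex P i d cx m \<longleftrightarrow> (\<exists>i'<i. cfst (cnth P i') = d \<and> c2 (cnth P i') = ccons m cx \<and> c3 (cnth P i') \<noteq> 0)"

lemma rp_mnex5: "rp 5 (\<lambda>xs. mnex (xs!0) (xs!1) (xs!2) (xs!3) (xs!4))"
  by (rule rp_bex[where Q="\<lambda>ws. cfst (cnth (ws!1) (ws!0)) = ws!3 \<and> c2 (cnth (ws!1) (ws!0)) = ccons (ws!5) (ws!4) \<and> c3 (cnth (ws!1) (ws!0)) \<noteq> 0" and a="\<lambda>xs. xs!1"])
     (auto intro!: rci rc_proj simp: mnex_def)

lemma rp_mnex[rci]: "rc n a \<Longrightarrow> rc n b \<Longrightarrow> rc n c \<Longrightarrow> rc n d \<Longrightarrow> rc n e \<Longrightarrow> rp n (\<lambda>xs. mnex (a xs) (b xs) (c xs) (d xs) (e xs))"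
  unfolding rp_def
  by (rule rc_compL[OF rp_mnex5[unfolded rp_def], of "[a,b,c,d,e]"]) (auto simp: eval_nat_numeral)

definition mnall :: "nat \<Rightarrow> nat \<Rightarrow> nat \<Rightarrow> nat \<Rightarrow> nat \<Rightarrow> bool" where
  "mnall P i d cx y \<longleftrightarrow> (\<forall>m<y. mnex P i d cx m)"

lemma rp_mnall5: "rp 5 (\<lambda>xs. mnall (xs!0) (xs!1) (xs!2) (xs!3) (xs!4))"
  by (rule rp_ball[where Q="\<lambda>ws. mnex (ws!1) (ws!2) (ws!3) (ws!4) (ws!0)" and a="\<lambda>xs. xs!4"])
     (auto intro!: rci rc_proj simp: mnall_def)

lemma rp_mnall[rci]: "rc n a \<Longrightarrow> rc n b \<Longrightarrow> rc n c \<Longrightarrow> rc n d \<Longrightarrow> rc n e \<Longrightarrow> rp n (\<lambda>xs. mnall (a xs) (b xs) (c xs) (d xs) (e xs))"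
  unfolding rp_def
  by (rule rc_compL[OF rp_mnall5[unfolded rp_def], of "[a,b,c,d,e]"]) (auto simp: eval_nat_numeral)

definition justc :: "nat \<Rightarrow> nat \<Rightarrow> nat \<Rightarrow> bool" where
"justc P i j \<longleftrightarrow>
  (if cfst (cfst j) = 1 then c2 j \<noteq> 0 \<and> c3 j = Suc (chd (c2 j))
  else if cfst (cfst j) = 2 then csnd (cfst j) < clen (c2 j) \<and> c3 j = cnth (c2 j) (csnd (cfst j))
  else if cfst (cfst j) = 3 then cnex P i (c3 j) (cfst (csnd (cfst j))) (csnd (csnd (cfst j))) (c2 j)
  else if cfst (cfst j) = 4 then c2 j \<noteq> 0 \<and> (if chd (c2 j) = 0 then memb P i (trip (cfst (csnd (cfst j))) (ctl (c2 j)) (c3 j))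
          else prex P i (cfst j) (c2 j) (c3 j) (csnd (csnd (cfst j))))
  else if cfst (cfst j) = 5 then memb P i (trip (csnd (cfst j)) (ccons (c3 j) (c2 j)) 0) \<and> mnall P i (csnd (cfst j)) (c2 j) (c3 j)
  else c3 j = 0)"

lemma rp_justc3: "rp 3 (\<lambda>xs. justc (xs!0) (xs!1) (xs!2))"
  unfolding justc_def by (intro rci rc_proj) auto

lemma bex_img: "(\<exists>x\<in>f ` A. Q x) = (\<exists>y\<in>A. Q (f y))" by auto

lemma justc_JJ: "justc P i j = JJ j (cnth P ` {..<i})"
  unfolding justc_def JJ_def Let_def cnex_def cnok_def prex_def mnall_def mnex_def memb_def
  apply (simp only: bex_img image_iff)
  apply (simp add: Bex_def lessThan_iff)
  done

definition validc :: "nat \<Rightarrow> bool" where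
  "validc P \<longleftrightarrow> (\<forall>i<clen P. justc P i (cnth P i))"

lemma rp_validc1: "rp 1 (\<lambda>xs. validc (xs!0))"
  by (rule rp_ball[where Q="\<lambda>ws. justc (ws!1) (ws!0) (cnth (ws!1) (ws!0))" and a="\<lambda>xs. clen (xs!0)"])
     (auto intro!: rci rc_proj rp_comp3[OF rp_justc3] simp: validc_def)

lemma rp_validc[rci]: "rc n a \<Longrightarrow> rp n (\<lambda>xs. validc (a xs))"
  by (rule rp_comp1[OF rp_validc1])

lemma img_take: "i \<le> length L \<Longrightarrow> cnth (list_encode L) ` {..<i} = set (take i L)"
  by (auto simp: set_conv_nth image_iff) (metis less_le_trans min.absorb4 nth_take order.strict_implies_order)+

lemma img_take2: "i \<le> length L \<Longrightarrow> (!) L ` {..<i} = set (take i L)"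
  by (auto simp: set_conv_nth image_iff) (metis less_le_trans min.absorb4 nth_take order.strict_implies_order)+

lemma validc_validL: "validc (list_encode L) \<longleftrightarrow> validL L"
proof -
  have "\<forall>i<length L. cnth (list_encode L) ` {..<i} = set (take i L)" by (simp add: img_take img_take2)
  then show ?thesis unfolding validc_def validL_def justc_JJ by simp
qed



definition lev :: "nat \<Rightarrow> nat \<Rightarrow> nat" where "lev e k = 2^(e+1) * (2*k+1)"

lemma rc_lev[rci]: "rc n a \<Longrightarrow> rc n b \<Longrightarrow> rc n (\<lambda>xs. lev (a xs) (b xs))"
  unfolding lev_def by (intro rci)

definition close :: "nat \<Rightarrow> nat \<Rightarrow> nat \<Rightarrow> nat \<Rightarrow> nat \<Rightarrow> nat \<Rightarrow> bool" where
  "close N s va vb vc l \<longleftrightarrow> ((N*(vc+1) + vb*4^s - va*4^s) + (va*4^s - (N*(vc+1) + vb*4^s))) * 2^(l+1) < 4^s*(vc+1)"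

lemma rp_close[rci]: "rc n a1 \<Longrightarrow> rc n a2 \<Longrightarrow> rc n a3 \<Longrightarrow> rc n a4 \<Longrightarrow> rc n a5 \<Longrightarrow> rc n a6 \<Longrightarrow>
  rp n (\<lambda>xs. close (a1 xs) (a2 xs) (a3 xs) (a4 xs) (a5 xs) (a6 xs))"
  unfolding close_def by (intro rci)

definition hasj :: "nat \<Rightarrow> nat \<Rightarrow> nat \<Rightarrow> nat \<Rightarrow> bool" where
  "hasj d t m v \<longleftrightarrow> memb d (clen d) (trip t (ccons m 0) v)"

lemma rp_hasj[rci]: "rc n a \<Longrightarrow> rc n b \<Longrightarrow> rc n c \<Longrightarrow> rc n e \<Longrightarrow> rp n (\<lambda>xs. hasj (a xs) (b xs) (c xs) (e xs))"
  unfolding hasj_def by (intro rci)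

definition a3 :: "nat \<Rightarrow> nat \<Rightarrow> nat \<Rightarrow> nat \<Rightarrow> nat \<Rightarrow> nat \<Rightarrow> nat \<Rightarrow> bool" where
  "a3 s N e k d va vb \<longleftrightarrow> (\<exists>vc<Suc d. hasj d (csnd e) (lev e (Suc k)) vc \<and> close N s va vb vc (lev e k))"

lemma rp_a3_7: "rp 7 (\<lambda>xs. a3 (xs!0) (xs!1) (xs!2) (xs!3) (xs!4) (xs!5) (xs!6))"
  by (rule rp_bex[where Q="\<lambda>ws. hasj (ws!5) (csnd (ws!3)) (lev (ws!3) (Suc (ws!4))) (ws!0) \<and> close (ws!2) (ws!1) (ws!6) (ws!7) (ws!0) (lev (ws!3) (ws!4))" and a="\<lambda>xs. Suc (xs!4)"])
     (auto intro!: rci rc_proj simp: a3_def)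

lemma rp_a3[rci]: "rc n x1 \<Longrightarrow> rc n x2 \<Longrightarrow> rc n x3 \<Longrightarrow> rc n x4 \<Longrightarrow> rc n x5 \<Longrightarrow> rc n x6 \<Longrightarrow> rc n x7 \<Longrightarrow>
  rp n (\<lambda>xs. a3 (x1 xs) (x2 xs) (x3 xs) (x4 xs) (x5 xs) (x6 xs) (x7 xs))"
  unfolding rp_def
  by (rule rc_compL[OF rp_a3_7[unfolded rp_def], of "[x1,x2,x3,x4,x5,x6,x7]"]) (auto simp: eval_nat_numeral)

definition a2 :: "nat \<Rightarrow> nat \<Rightarrow> nat \<Rightarrow> nat \<Rightarrow> nat \<Rightarrow> nat \<Rightarrow> bool" where
  "a2 s N e k d va \<longleftrightarrow> (\<exists>vb<Suc d. hasj d (csnd (cfst e)) (lev e (Suc k)) vb \<and> a3 s N e k d va vb)"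

lemma rp_a2_6: "rp 6 (\<lambda>xs. a2 (xs!0) (xs!1) (xs!2) (xs!3) (xs!4) (xs!5))"
  by (rule rp_bex[where Q="\<lambda>ws. hasj (ws!5) (csnd (cfst (ws!3))) (lev (ws!3) (Suc (ws!4))) (ws!0) \<and> a3 (ws!1) (ws!2) (ws!3) (ws!4) (ws!5) (ws!6) (ws!0)" and a="\<lambda>xs. Suc (xs!4)"])
     (auto intro!: rci rc_proj simp: a2_def)

lemma rp_a2[rci]: "rc n x1 \<Longrightarrow> rc n x2 \<Longrightarrow> rc n x3 \<Longrightarrow> rc n x4 \<Longrightarrow> rc n x5 \<Longrightarrow> rc n x6 \<Longrightarrow>
  rp n (\<lambda>xs. a2 (x1 xs) (x2 xs) (x3 xs) (x4 xs) (x5 xs) (x6 xs))"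
  unfolding rp_def
  by (rule rc_compL[OF rp_a2_6[unfolded rp_def], of "[x1,x2,x3,x4,x5,x6]"]) (auto simp: eval_nat_numeral)

definition a1 :: "nat \<Rightarrow> nat \<Rightarrow> nat \<Rightarrow> nat \<Rightarrow> nat \<Rightarrow> bool" where
  "a1 s N e k d \<longleftrightarrow> (\<exists>va<Suc d. hasj d (cfst (cfst e)) (lev e (Suc k)) va \<and> a2 s N e k d va)"

lemma rp_a1_5: "rp 5 (\<lambda>xs. a1 (xs!0) (xs!1) (xs!2) (xs!3) (xs!4))"
  by (rule rp_bex[where Q="\<lambda>ws. hasj (ws!5) (cfst (cfst (ws!3))) (lev (ws!3) (Suc (ws!4))) (ws!0) \<and> a2 (ws!1) (ws!2) (ws!3) (ws!4) (ws!5) (ws!0)" and a="\<lambda>xs. Suc (xs!4)"])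
     (auto intro!: rci rc_proj simp: a1_def)

lemma rp_a1[rci]: "rc n x1 \<Longrightarrow> rc n x2 \<Longrightarrow> rc n x3 \<Longrightarrow> rc n x4 \<Longrightarrow> rc n x5 \<Longrightarrow>
  rp n (\<lambda>xs. a1 (x1 xs) (x2 xs) (x3 xs) (x4 xs) (x5 xs))"
  unfolding rp_def
  by (rule rc_compL[OF rp_a1_5[unfolded rp_def], of "[x1,x2,x3,x4,x5]"]) (auto simp: eval_nat_numeral)

definition act :: "nat \<Rightarrow> nat \<Rightarrow> nat \<Rightarrow> nat \<Rightarrow> bool" where
  "act s N e k \<longleftrightarrow> lev e (Suc k) \<le> s \<and> (\<exists>d<Suc s. validc d \<and> a1 s N e k d)"

lemma rp_act4: "rp 4 (\<lambda>xs. act (xs!0) (xs!1) (xs!2) (xs!3))"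
proof -
  have H: "rp 4 (\<lambda>xs. \<exists>d<Suc (xs!0). validc d \<and> a1 (xs!0) (xs!1) (xs!2) (xs!3) d)"
    by (rule rp_bex[where Q="\<lambda>ws. validc (ws!0) \<and> a1 (ws!1) (ws!2) (ws!3) (ws!4) (ws!0)" and a="\<lambda>xs. Suc (xs!0)"])
       (auto intro!: rci rc_proj)
  show ?thesis unfolding act_def
    apply (rule rp_and[OF _ H])
    apply (intro rci rc_proj)
    apply auto
    done
qed

lemma rp_act[rci]: "rc n x1 \<Longrightarrow> rc n x2 \<Longrightarrow> rc n x3 \<Longrightarrow> rc n x4 \<Longrightarrow>
  rp n (\<lambda>xs. act (x1 xs) (x2 xs) (x3 xs) (x4 xs))"
  unfolding rp_def
  by (rule rc_compL[OF rp_act4[unfolded rp_def], of "[x1,x2,x3,x4]"]) (auto simp: eval_nat_numeral)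

definition incE :: "nat \<Rightarrow> nat \<Rightarrow> nat \<Rightarrow> nat" where
  "incE s N e = (\<Sum>k<s. if act s N e k then 2^(2*s+2 - lev e k) else 0)"

lemma rc_incE3: "rc 3 (\<lambda>xs. incE (xs!0) (xs!1) (xs!2))"
  by (rule rc_sum[where F="\<lambda>ws. if act (ws!1) (ws!2) (ws!3) (ws!0) then 2^(2*(ws!1)+2 - lev (ws!3) (ws!0)) else 0" and a="\<lambda>xs. xs!0"])
     (auto intro!: rci rc_proj sum.cong simp: incE_def numeral_eq_Suc)

lemma rc_incE[rci]: "rc n x1 \<Longrightarrow> rc n x2 \<Longrightarrow> rc n x3 \<Longrightarrow> rc n (\<lambda>xs. incE (x1 xs) (x2 xs) (x3 xs))"
  using rc_comp3[OF rc_incE3] by simp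

definition inc :: "nat \<Rightarrow> nat \<Rightarrow> nat" where
  "inc s N = (\<Sum>e<Suc s. incE s N e)"

lemma rc_inc2: "rc 2 (\<lambda>xs. inc (xs!0) (xs!1))"
  by (rule rc_sum[where F="\<lambda>ws. incE (ws!1) (ws!2) (ws!0)" and a="\<lambda>xs. Suc (xs!0)"])
     (auto intro!: rci rc_proj simp: inc_def)

lemma rc_inc[rci]: "rc n x1 \<Longrightarrow> rc n x2 \<Longrightarrow> rc n (\<lambda>xs. inc (x1 xs) (x2 xs))"
  using rc_comp2[OF rc_inc2] by simp

primrec Nf :: "nat \<Rightarrow> nat" where
  "Nf 0 = 0"
| "Nf (Suc s) = 4 * Nf s + 2 + inc s (Nf s)"

lemma rc_Nf: "rc 1 (\<lambda>xs. Nf (xs!0))"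
proof -
  have "rc (Suc 0) (\<lambda>xs. Nf (xs!0))"
    by (rule rc_prim[where f="\<lambda>ys. 0" and g="\<lambda>zs. 4 * zs!1 + 2 + inc (zs!0) (zs!1)"])
       (auto intro!: rci rc_proj)
  then show ?thesis by simp
qed

lemma computable_fun_rc: "rc 1 (\<lambda>xs. f (xs!0)) \<Longrightarrow> computable_fun f"
  unfolding rc_def computable_fun_def
  by (metis One_nat_def length_Cons list.size(3) nth_Cons_0)

lemma computable_Nf: "computable_fun Nf"
  by (rule computable_fun_rc[OF rc_Nf])

lemma computable_den: "computable_fun (\<lambda>s. 4^s - 1)"
  by (rule computable_fun_rc) (auto intro!: rci rc_proj)

lemma computable_zero: "computable_fun (\<lambda>s. 0)"
  by (rule computable_fun_rc) (auto intro!: rci)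



lemma nat_absdiff: "real ((x - y) + (y - x)) = \<bar>real x - real y\<bar>"
  by (cases "x \<le> y") (auto simp: of_nat_diff)

lemma nat_absdiff': "real (x - y) + real (y - x) = \<bar>real x - real y\<bar>"
  by (cases "x \<le> y") (auto simp: of_nat_diff)

lemma close_iff: "close N s va vb vc l \<longleftrightarrow>
   \<bar>real N / 4^s - (real va - real vb) / (real vc + 1)\<bar> < (1/2)^(l+1)"
proof -
  define A where "A = N*(vc+1) + vb*4^s"
  define B where "B = va*4^s"
  have pos: "(0::real) < 4^s * (real vc + 1)" by simp
  have eq: "real N / 4^s - (real va - real vb) / (real vc + 1) = (real A - real B) / (4^s * (real vc + 1))"
    unfolding A_def B_def by (simp add: field_simps)
  have "close N s va vb vc l \<longleftrightarrow> \<bar>real A - real B\<bar> * 2^(l+1) < 4^s * (real vc + 1)"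
  proof -
    have "close N s va vb vc l \<longleftrightarrow> real (((A - B) + (B - A)) * 2^(l+1)) < real (4^s*(vc+1))"
      unfolding close_def A_def B_def of_nat_less_iff ..
    also have "\<dots> \<longleftrightarrow> \<bar>real A - real B\<bar> * 2^(l+1) < 4^s * (real vc + 1)"
      by (simp only: of_nat_mult nat_absdiff' of_nat_power of_nat_add of_nat_1 of_nat_numeral)
    finally show ?thesis .
  qed
  also have "\<dots> \<longleftrightarrow> \<bar>real A - real B\<bar> / (4^s * (real vc + 1)) < (1/2)^(l+1)"
    using pos by (simp add: divide_less_eq power_one_over field_simps)
  also have "\<dots> \<longleftrightarrow> \<bar>(real A - real B) / (4^s * (real vc + 1))\<bar> < (1/2)^(l+1)"
    using pos by (simp add: abs_divide)
  finally show ?thesis using eq by simp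
qed

lemma lev_pos: "2 \<le> lev e k"
proof -
  have "2 \<le> (2::nat)^(e+1)" by (simp add: self_le_power)
  also have "\<dots> \<le> 2^(e+1) * (2*k+1)" by simp
  finally show ?thesis by (simp add: lev_def)
qed

lemma lev_even: "even (lev e k)" by (simp add: lev_def)

lemma lev_mono: "lev e k < lev e (Suc k)" by (simp add: lev_def)

lemma lev_strict_mono: "strict_mono (lev e)"
  unfolding strict_mono_Suc_iff by (simp add: lev_mono)

lemma lev_ge: "e < lev e k" "k < lev e k"
proof -
  have "e < 2^e" by (rule less_exp)
  also have "\<dots> \<le> 2^(e+1) * (2*k+1)" by simp
  finally show "e < lev e k" by (simp add: lev_def)
  have "k < 2*k+1" by simp
  also have "\<dots> \<le> 2^(e+1) * (2*k+1)" by (metis mult_le_mono1 mult_1 one_le_numeral one_le_power)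
  finally show "k < lev e k" by (simp add: lev_def)
qed

lemma lev_inj: "lev e k = lev e' k' \<Longrightarrow> e = e' \<and> k = k'"
proof -
  have key: "lev e k \<noteq> lev e' k'" if "e < e'" for e e' k k'
  proof
    assume "lev e k = lev e' k'"
    moreover have "(2::nat)^(e'+1) = 2^(e+1) * 2^(e'-e)" using that by (simp add: power_add[symmetric])
    ultimately have "(2::nat)^(e+1) * (2*k+1) = 2^(e+1) * (2^(e'-e) * (2*k'+1))"
      unfolding lev_def by (metis mult.assoc)
    then have "2*k+1 = 2^(e'-e) * (2*k'+1)" by (subst (asm) mult_left_cancel) simp_all
    moreover have "even ((2::nat)^(e'-e) * (2*k'+1))" using that by simp
    ultimately have "even (2*k+1::nat)" by metis
    then show False by simp
  qed
  assume h: "lev e k = lev e' k'"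
  have "e = e'" using key[of e e' k k'] key[of e' e k' k] h by (metis linorder_neqE_nat)
  then show ?thesis using h by (simp add: lev_def)
qed

lemma act_bounds: "act s N e k \<Longrightarrow> e < s \<and> k < s \<and> lev e k < s"
  using lev_ge(1)[of e "Suc k"] lev_ge(2)[of "Suc k" e] lev_mono[of e k] unfolding act_def by auto

lemma memb_le: "memb (list_encode L) (clen (list_encode L)) x \<longleftrightarrow> x \<in> set L"
  by (auto simp: memb_def in_set_conv_nth)

lemma ccons_single: "ccons m 0 = list_encode [m]" by (simp add: ccons_def)

lemma hasj_sem: "validc d \<Longrightarrow> hasj d t m v \<Longrightarrow> eval (dec t) [m] v"
proof -
  assume v: "validc d" and h: "hasj d t m v"
  define L where "L = list_decode d"
  have d: "d = list_encode L" by (simp add: L_def)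
  have "validL L" using v d validc_validL by simp
  moreover have "trip t (ccons m 0) v \<in> set L" using h d memb_le unfolding hasj_def by simp
  ultimately have "sem (trip t (ccons m 0) v)" by (rule validL_sound)
  then show ?thesis by (simp add: sem_def ccons_single)
qed

lemma act_sem: "act s N e k \<Longrightarrow> \<exists>va vb vc.
   eval (dec (cfst (cfst e))) [lev e (Suc k)] va \<and> eval (dec (csnd (cfst e))) [lev e (Suc k)] vb \<and>
   eval (dec (csnd e)) [lev e (Suc k)] vc \<and>
   \<bar>real N / 4^s - (real va - real vb) / (real vc + 1)\<bar> < (1/2)^(lev e k + 1)"
  unfolding act_def a1_def a2_def a3_def close_iff
  by (meson hasj_sem)

lemma trip_le3: "c \<le> trip a b c"
  unfolding trip_def using le_prod_encode_2 le_trans by blast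

lemma act_complete:
  fixes ta tb tc e k
  defines "e \<equiv> prod_encode (prod_encode (enc ta, enc tb), enc tc)"
  assumes "eval ta [lev e (Suc k)] va" "eval tb [lev e (Suc k)] vb" "eval tc [lev e (Suc k)] vc"
  shows "\<exists>D. \<forall>s N. D \<le> s \<longrightarrow> \<bar>real N / 4^s - (real va - real vb) / (real vc + 1)\<bar> < (1/2)^(lev e k + 1) \<longrightarrow> act s N e k"
proof -
  define m where "m = lev e (Suc k)"
  obtain L1 L2 L3 where L: "validL L1" "validL L2" "validL L3"
    "trip (enc ta) (list_encode [m]) va \<in> set L1"
    "trip (enc tb) (list_encode [m]) vb \<in> set L2"
    "trip (enc tc) (list_encode [m]) vc \<in> set L3"
    using complete[OF assms(2)] complete[OF assms(3)] complete[OF assms(4)] unfolding m_def by blast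
  define L where "L = L1 @ L2 @ L3"
  define d where "d = list_encode L"
  have vL: "validL L" using L by (simp add: L_def validL_append)
  have vd: "validc d" using vL by (simp add: d_def validc_validL)
  have mem: "trip (enc ta) (ccons m 0) va \<in> set L" "trip (enc tb) (ccons m 0) vb \<in> set L"
    "trip (enc tc) (ccons m 0) vc \<in> set L"
    using L by (auto simp: L_def ccons_single)
  have lt: "x \<in> set L \<Longrightarrow> x < d" for x using mem_lt_le[of x L] by (simp add: d_def)
  have vlt: "va < Suc d" "vb < Suc d" "vc < Suc d"
    using lt[OF mem(1)] lt[OF mem(2)] lt[OF mem(3)] trip_le3[of va] trip_le3[of vb] trip_le3[of vc]
    by (meson le_less_trans less_Suc_eq)+
  have hs: "hasj d (enc ta) m va" "hasj d (enc tb) m vb" "hasj d (enc tc) m vc"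
    using mem unfolding hasj_def d_def memb_le by simp_all
  have ce: "cfst (cfst e) = enc ta" "csnd (cfst e) = enc tb" "csnd e = enc tc"
    by (simp_all add: e_def)
  show ?thesis
  proof (intro exI[of _ "max d m"] allI impI)
    fix s N assume s: "max d m \<le> s" and c: "\<bar>real N / 4^s - (real va - real vb) / (real vc + 1)\<bar> < (1/2)^(lev e k + 1)"
    have "a1 s N e k d"
      unfolding a1_def a2_def a3_def ce m_def[symmetric]
      using vlt hs c by (auto simp: close_iff)
    then show "act s N e k" unfolding act_def m_def[symmetric]
      using s vd by (auto intro!: exI[of _ d])
  qed
qed



definition xr :: "nat \<Rightarrow> real" where "xr s = real (Nf s) / 4^s"

lemma pow_div: "l \<le> 2*s+2 \<Longrightarrow> (2::real)^(2*s+2-l) / 4^(Suc s) = (1/2)^l"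
proof -
  assume l: "l \<le> 2*s+2"
  have e: "2*s+2 = 2*(Suc s)" by simp
  have "(2::real)^(2*s+2) = (2^2)^(Suc s)"
    unfolding e by (rule power_mult)
  then have "(4::real)^(Suc s) = 2^(2*s+2)" by simp
  also have "\<dots> = 2^(2*s+2-l) * 2^l" using l by (simp add: power_add[symmetric])
  finally show ?thesis by (simp add: power_one_over)
qed

definition tm :: "nat \<Rightarrow> nat \<Rightarrow> nat \<Rightarrow> real" where
  "tm s e k = (if act s (Nf s) e k then (1/2)^(lev e k) else 0)"

lemma xr_Suc: "xr (Suc s) = xr s + (1/2)^(2*s+1) + (\<Sum>e<Suc s. \<Sum>k<s. tm s e k)"
proof -
  have "real (inc s (Nf s)) / 4^(Suc s) = (\<Sum>e<Suc s. \<Sum>k<s. tm s e k)"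
  proof -
    have "real (inc s (Nf s)) / 4^(Suc s) = (\<Sum>e<Suc s. \<Sum>k<s. real (if act s (Nf s) e k then 2^(2*s+2 - lev e k) else 0) / 4^(Suc s))"
      unfolding inc_def incE_def by (simp only: of_nat_sum sum_divide_distrib)
    also have "\<dots> = (\<Sum>e<Suc s. \<Sum>k<s. tm s e k)"
    proof (intro sum.cong refl)
      fix e k
      show "real (if act s (Nf s) e k then 2^(2*s+2 - lev e k) else 0) / 4^(Suc s) = tm s e k"
      proof (cases "act s (Nf s) e k")
        case True
        then have "lev e k \<le> 2*s+2" using act_bounds by fastforce
        then show ?thesis using True by (simp add: tm_def pow_div[symmetric])
      qed (simp add: tm_def)
    qed
    finally show ?thesis .
  qed
  moreover have "(2::real) / 4^(Suc s) = (1/2)^(2*s+1)"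
    using pow_div[of "2*s+1" s] by simp
  moreover have "xr (Suc s) = real (Nf s) / 4^s + 2/4^(Suc s) + real (inc s (Nf s))/4^(Suc s)"
    by (simp add: xr_def add_divide_distrib)
  ultimately show ?thesis by (simp add: xr_def)
qed

definition ActS :: "nat \<Rightarrow> (nat \<times> nat) set" where
  "ActS s = {(e,k). e < Suc s \<and> k < s \<and> act s (Nf s) e k}"

definition Lv :: "nat \<Rightarrow> nat set" where
  "Lv s = insert (2*s+1) ((\<lambda>(e,k). lev e k) ` ActS s)"

lemma finite_ActS: "finite (ActS s)"
  by (rule finite_subset[of _ "{..<Suc s} \<times> {..<s}"]) (auto simp: ActS_def)

lemma finite_Lv: "finite (Lv s)" by (simp add: Lv_def finite_ActS)

lemma lev_inj_on: "inj_on (\<lambda>(e,k). lev e k) A"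
  by (auto simp: inj_on_def dest: lev_inj)

lemma sum_term: "(\<Sum>e<Suc s. \<Sum>k<s. tm s e k) = (\<Sum>l\<in>(\<lambda>(e,k). lev e k) ` ActS s. (1/2)^l)"
proof -
  have "(\<Sum>e<Suc s. \<Sum>k<s. tm s e k) = (\<Sum>p\<in>{..<Suc s} \<times> {..<s}. tm s (fst p) (snd p))"
    by (simp add: sum.cartesian_product case_prod_beta)
  also have "\<dots> = (\<Sum>p\<in>ActS s. (1/2)^(lev (fst p) (snd p)))"
    unfolding tm_def
    by (subst sum.If_cases) (auto simp: ActS_def intro!: sum.cong)
  also have "\<dots> = (\<Sum>l\<in>(\<lambda>(e,k). lev e k) ` ActS s. (1/2)^l)"
    by (subst sum.reindex[OF lev_inj_on]) (auto simp: case_prod_beta)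
  finally show ?thesis .
qed

lemma lev_odd: "lev e k \<noteq> 2*s+1"
proof
  assume "lev e k = 2*s+1"
  then have "even (2*s+1::nat)" using lev_even by metis
  then show False by simp
qed

lemma odd_notin: "2*s+1 \<notin> (\<lambda>(e,k). lev e k) ` A"
  using lev_odd by (auto simp: eq_commute)

lemma incr_Lv: "xr (Suc s) - xr s = (\<Sum>l\<in>Lv s. (1/2)^l)"
proof -
  have "xr (Suc s) - xr s = (1/2)^(2*s+1) + (\<Sum>l\<in>(\<lambda>(e,k). lev e k) ` ActS s. (1/2)^l)"
    using xr_Suc[of s, unfolded sum_term] by linarith
  also have "\<dots> = (\<Sum>l\<in>Lv s. (1/2)^l)"
    unfolding Lv_def using finite_ActS odd_notin[of s "ActS s"] by (subst sum.insert) auto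
  finally show ?thesis .
qed

lemma incr_ge: "l \<in> Lv s \<Longrightarrow> (1/2)^l \<le> xr (Suc s) - xr s"
  unfolding incr_Lv by (rule member_le_sum) (auto simp: finite_Lv)

lemma xr_less_Suc: "xr s < xr (Suc s)"
proof -
  have "(1/2::real)^(2*s+1) \<le> xr (Suc s) - xr s" by (rule incr_ge) (simp add: Lv_def)
  moreover have "(0::real) < (1/2)^(2*s+1)" by simp
  ultimately show ?thesis by linarith
qed

lemma xr_strict: "strict_mono xr"
  unfolding strict_mono_Suc_iff by (simp add: xr_less_Suc)

lemma xr_mono: "mono xr"
  using xr_strict strict_mono_mono by blast

lemma act_in_Lv: "act s (Nf s) e k \<Longrightarrow> lev e k \<in> Lv s"
  using act_bounds[of s "Nf s" e k] unfolding Lv_def ActS_def by force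

lemma act_jump: "act s (Nf s) e k \<Longrightarrow> xr s + (1/2)^(lev e k) \<le> xr (Suc s)"
  by (drule act_in_Lv, drule incr_ge) simp

lemma act_once:
  assumes a: "act s (Nf s) e k" and b: "act t (Nf t) e k" and st: "s < t"
  shows False
proof -
  from act_sem[OF a] obtain va vb vc where A:
    "eval (dec (cfst (cfst e))) [lev e (Suc k)] va" "eval (dec (csnd (cfst e))) [lev e (Suc k)] vb"
    "eval (dec (csnd e)) [lev e (Suc k)] vc"
    "\<bar>real (Nf s) / 4^s - (real va - real vb) / (real vc + 1)\<bar> < (1/2)^(lev e k + 1)" by blast
  from act_sem[OF b] obtain va' vb' vc' where B:
    "eval (dec (cfst (cfst e))) [lev e (Suc k)] va'" "eval (dec (csnd (cfst e))) [lev e (Suc k)] vb'"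
    "eval (dec (csnd e)) [lev e (Suc k)] vc'"
    "\<bar>real (Nf t) / 4^t - (real va' - real vb') / (real vc' + 1)\<bar> < (1/2)^(lev e k + 1)" by blast
  have eq: "va' = va" "vb' = vb" "vc' = vc" using A B eval_det by blast+
  define q where "q = (real va - real vb) / (real vc + 1)"
  define b where "b = (1/2::real)^(lev e k + 1)"
  have "xr s + 2*b \<le> xr (Suc s)" using act_jump[OF a] by (simp add: b_def)
  also have "xr (Suc s) \<le> xr t" using xr_mono st by (simp add: mono_def)
  finally have "xr s + 2*b \<le> xr t" .
  moreover have "\<bar>xr s - q\<bar> < b" "\<bar>xr t - q\<bar> < b" using A(4) B(4) eq by (simp_all add: xr_def q_def b_def)
  ultimately show False by linarith
qed

lemma Lv_disj: "s \<noteq> t \<Longrightarrow> Lv s \<inter> Lv t = {}"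
proof -
  assume st: "s \<noteq> t"
  have "l \<notin> Lv t" if ls: "l \<in> Lv s" for l
  proof
    assume lt: "l \<in> Lv t"
    show False
    proof (cases "l = 2*s+1")
      case True
      then have "l \<noteq> 2*t+1" using st by simp
      then show False using lt True odd_notin[of _ "ActS t"] unfolding Lv_def by auto
    next
      case False
      then obtain e k where ek: "(e,k) \<in> ActS s" "l = lev e k" using ls unfolding Lv_def by auto
      then have "l \<noteq> 2*t+1" using lev_odd by auto
      then obtain e' k' where ek': "(e',k') \<in> ActS t" "l = lev e' k'" using lt unfolding Lv_def by auto
      then have "e' = e" "k' = k" using ek lev_inj by metis+
      then have "act s (Nf s) e k" "act t (Nf t) e k" using ek ek' by (auto simp: ActS_def)
      then show False using act_once st by (metis linorder_neqE_nat)
    qed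
  qed
  then show ?thesis by blast
qed

lemma lev_pos': "0 < lev e k" using lev_pos[of e k] by simp

lemma Lv_pos: "l \<in> Lv s \<Longrightarrow> 0 < l"
  unfolding Lv_def using lev_pos' by auto

lemma geo_sum: "m \<le> M \<Longrightarrow> (\<Sum>l\<in>{m<..M}. (1/2::real)^l) = (1/2)^m - (1/2)^M"
proof (induction M)
  case 0 then show ?case by simp
next
  case (Suc M)
  show ?case
  proof (cases "m = Suc M")
    case True then show ?thesis by simp
  next
    case False
    then have "m \<le> M" using Suc by simp
    then have "{m<..Suc M} = insert (Suc M) {m<..M}" by auto
    then show ?thesis using Suc.IH[OF \<open>m \<le> M\<close>] by simp
  qed
qed

lemma geo_bound:
  assumes F: "finite F" and gt: "\<forall>l\<in>F. m < l"
  shows "(\<Sum>l\<in>F. (1/2::real)^l) \<le> (1/2)^m"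
proof -
  define M where "M = max m (Max (insert m F))"
  have sub: "F \<subseteq> {m<..M}" using F gt by (auto simp: M_def)
  have "(\<Sum>l\<in>F. (1/2::real)^l) \<le> (\<Sum>l\<in>{m<..M}. (1/2::real)^l)"
    by (rule sum_mono2[OF _ sub]) auto
  also have "\<dots> = (1/2)^m - (1/2)^M" by (rule geo_sum) (simp add: M_def)
  also have "\<dots> \<le> (1/2)^m" by simp
  finally show ?thesis .
qed

lemma xr_diff_Lv: "s \<le> t \<Longrightarrow> xr t - xr s = (\<Sum>l\<in>(\<Union>u\<in>{s..<t}. Lv u). (1/2)^l)"
proof -
  assume "s \<le> t"
  have "xr t - xr s = (\<Sum>u\<in>{s..<t}. xr (Suc u) - xr u)"
    using \<open>s \<le> t\<close> by (simp add: sum_Suc_diff')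
  also have "\<dots> = (\<Sum>u\<in>{s..<t}. \<Sum>l\<in>Lv u. (1/2)^l)" by (simp add: incr_Lv)
  also have "\<dots> = (\<Sum>l\<in>(\<Union>u\<in>{s..<t}. Lv u). (1/2)^l)"
    by (rule sum.UNION_disjoint[symmetric]) (auto simp: finite_Lv dest: Lv_disj)
  finally show ?thesis .
qed

lemma xr_le1: "xr s \<le> 1"
proof -
  have "xr s - xr 0 = (\<Sum>l\<in>(\<Union>u\<in>{0..<s}. Lv u). (1/2)^l)" by (rule xr_diff_Lv) simp
  also have "\<dots> \<le> (1/2)^0" by (rule geo_bound) (auto simp: finite_Lv Lv_pos)
  finally show ?thesis by (simp add: xr_def)
qed



lemma xr_bounded: "\<exists>L. xr \<longlonglongrightarrow> L \<and> (\<forall>i. xr i \<le> L)"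
  by (rule incseq_convergent[of xr 1]) (auto simp: xr_le1 incseq_def intro: monoD[OF xr_mono])

definition X :: real where "X = (SOME L. xr \<longlonglongrightarrow> L \<and> (\<forall>i. xr i \<le> L))"

lemma X_lim: "xr \<longlonglongrightarrow> X" and xr_le_X: "xr i \<le> X"
  using someI_ex[OF xr_bounded] unfolding X_def[symmetric] by auto

lemma xr_less_X: "xr i < X"
  using xr_less_Suc[of i] xr_le_X[of "Suc i"] by linarith

definition mn :: "nat \<Rightarrow> nat" where "mn t = Min (Lv t)"

lemma mn_in: "mn t \<in> Lv t" unfolding mn_def by (rule Min_in) (auto simp: finite_Lv Lv_def finite_ActS)
lemma mn_le: "l \<in> Lv t \<Longrightarrow> mn t \<le> l" unfolding mn_def by (rule Min_le) (auto simp: finite_Lv)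

lemma rec_stage: "\<exists>s\<ge>N. X - xr (Suc s) \<le> xr (Suc s) - xr s"
proof -
  define \<mu> where "\<mu> = (LEAST v. \<exists>t\<ge>N. mn t = v)"
  have ex: "\<exists>v t. t \<ge> N \<and> mn t = v" by auto
  obtain s where s: "s \<ge> N" "mn s = \<mu>"
    using LeastI_ex[of "\<lambda>v. \<exists>t\<ge>N. mn t = v"] ex unfolding \<mu>_def by blast
  have min: "\<mu> \<le> mn t" if "t \<ge> N" for t unfolding \<mu>_def by (rule Least_le) (use that in auto)
  have gt: "mn s < l" if "t > s" "l \<in> Lv t" for t l
  proof -
    have "mn s \<le> l" using min[of t] s that mn_le[of l t] by simp
    moreover have "l \<noteq> mn s" using Lv_disj[of s t] mn_in[of s] that by auto
    ultimately show ?thesis by simp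
  qed
  have bound: "xr T - xr (Suc s) \<le> (1/2)^(mn s)" if "T \<ge> Suc s" for T
  proof -
    have "xr T - xr (Suc s) = (\<Sum>l\<in>(\<Union>u\<in>{Suc s..<T}. Lv u). (1/2)^l)" by (rule xr_diff_Lv) (use that in simp)
    also have "\<dots> \<le> (1/2)^(mn s)" by (rule geo_bound) (auto simp: finite_Lv Suc_le_eq intro: gt)
    finally show ?thesis .
  qed
  have "X - xr (Suc s) \<le> (1/2)^(mn s)"
  proof (rule LIMSEQ_le_const2)
    show "(\<lambda>T. xr T - xr (Suc s)) \<longlonglongrightarrow> X - xr (Suc s)" by (intro tendsto_intros X_lim)
    show "\<exists>N. \<forall>n\<ge>N. xr n - xr (Suc s) \<le> (1/2)^(mn s)" using bound by blast
  qed
  also have "\<dots> \<le> xr (Suc s) - xr s" by (rule incr_ge[OF mn_in])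
  finally show ?thesis using s by blast
qed

lemma lev_bracket: "lev e 0 < n \<Longrightarrow> \<exists>k. lev e k < n \<and> n \<le> lev e (Suc k)"
proof -
  assume n: "lev e 0 < n"
  have ex: "\<exists>k. n \<le> lev e (Suc k)" using lev_ge(2)[of "Suc n" e] by (intro exI[of _ n]) simp
  define k where "k = (LEAST k. n \<le> lev e (Suc k))"
  have k: "n \<le> lev e (Suc k)" unfolding k_def by (rule LeastI_ex[OF ex])
  have "lev e k < n"
  proof (cases k)
    case 0 then show ?thesis using n by simp
  next
    case (Suc k')
    have "\<not> n \<le> lev e (Suc k')" using Suc not_less_Least[of k' "\<lambda>k. n \<le> lev e (Suc k)"] unfolding k_def by simp
    then show ?thesis using Suc by simp
  qed
  then show ?thesis using k by blast
qed

lemma powi_half: "(2::real) powi (- int n) = (1/2)^n"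
  by (simp add: power_int_minus power_one_over inverse_eq_divide)

lemma rat_seq_val: "real_of_rat ((of_nat a - of_nat b) / of_nat (Suc c)) = (real a - real b) / (real c + 1)"
  by (simp add: of_rat_divide of_rat_diff of_rat_add)

lemma not_RA: "\<not> regainingly_approximable X"
proof
  assume "regainingly_approximable X"
  then obtain q where cq: "computable_rat_seq q" and mq: "mono q"
    and lim: "(\<lambda>n. real_of_rat (q n)) \<longlonglongrightarrow> X"
    and fr: "\<exists>\<^sub>F n in sequentially. X - real_of_rat (q n) < 2 powi (- int n)"
    unfolding regainingly_approximable_def by blast
  from cq obtain a b c where abc: "computable_fun a" "computable_fun b" "computable_fun c"
    "\<forall>n. q n = (of_nat (a n) - of_nat (b n)) / of_nat (Suc (c n))"
    unfolding computable_rat_seq_def by blast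
  from abc(1-3) obtain ta tb tc where t: "\<forall>n. eval ta [n] (a n)" "\<forall>n. eval tb [n] (b n)" "\<forall>n. eval tc [n] (c n)"
    unfolding computable_fun_def by blast
  define e where "e = prod_encode (prod_encode (enc ta, enc tb), enc tc)"
  have qv: "real_of_rat (q n) = (real (a n) - real (b n)) / (real (c n) + 1)" for n
    using abc(4) rat_seq_val by simp
  have inc: "incseq (\<lambda>n. real_of_rat (q n))"
    using mq unfolding incseq_def mono_def by (simp add: of_rat_less_eq)
  have C: "(1/2)^(lev e k + 1) \<le> X - real_of_rat (q (lev e (Suc k)))" for k
  proof (rule ccontr)
    define m where "m = lev e (Suc k)"
    define Q where "Q = real_of_rat (q m)"
    define bb where "bb = (1/2::real)^(lev e k + 1)"
    assume "\<not> (1/2)^(lev e k + 1) \<le> X - real_of_rat (q (lev e (Suc k)))"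
    then have XQ: "X < Q + bb" unfolding Q_def bb_def m_def by simp
    have QX: "Q \<le> X" unfolding Q_def using incseq_le[OF inc lim] .
    have bpos: "0 < bb" by (simp add: bb_def)
    obtain D where D: "\<forall>s N. D \<le> s \<longrightarrow> \<bar>real N / 4^s - (real (a m) - real (b m)) / (real (c m) + 1)\<bar> < bb \<longrightarrow> act s N e k"
      using act_complete[of ta tb tc k "a m" "b m" "c m"] t unfolding e_def[symmetric] m_def[symmetric] bb_def by blast
    have "\<forall>\<^sub>F s in sequentially. Q - bb < xr s"
      using X_lim QX bpos by (intro order_tendstoD(1)) auto
    then obtain S where S: "\<forall>s\<ge>S. Q - bb < xr s" by (auto simp: eventually_sequentially)
    define s where "s = max S D"
    have xs: "Q - bb < xr s" using S by (simp add: s_def)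
    have "xr s \<le> X" by (rule xr_le_X)
    then have "\<bar>xr s - Q\<bar> < bb" using xs XQ by linarith
    then have "act s (Nf s) e k" using D qv[of m] unfolding Q_def xr_def s_def by auto
    then have "xr s + (1/2)^(lev e k) \<le> xr (Suc s)" by (rule act_jump)
    moreover have "(1/2::real)^(lev e k) = 2 * bb" by (simp add: bb_def)
    moreover have "xr (Suc s) \<le> X" by (rule xr_le_X)
    ultimately show False using xs XQ by linarith
  qed
  have ev: "\<forall>n\<ge>Suc (lev e 0). \<not> X - real_of_rat (q n) < 2 powi (- int n)"
  proof (intro allI impI)
    fix n assume "Suc (lev e 0) \<le> n"
    then obtain k where k: "lev e k < n" "n \<le> lev e (Suc k)" using lev_bracket[of e n] by auto
    have "real_of_rat (q n) \<le> real_of_rat (q (lev e (Suc k)))" using inc k(2) by (simp add: incseq_def)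
    moreover have "(1/2::real)^n \<le> (1/2)^(lev e k + 1)" using k(1) by (intro power_decreasing) auto
    ultimately show "\<not> X - real_of_rat (q n) < 2 powi (- int n)" using C[of k] by (simp add: powi_half)
  qed
  from fr obtain n where "n \<ge> Suc (lev e 0)" "X - real_of_rat (q n) < 2 powi (- int n)"
    unfolding frequently_sequentially by blast
  then show False using ev by blast
qed

definition xq :: "nat \<Rightarrow> rat" where
  "xq s = (of_nat (Nf s) - of_nat ((\<lambda>_. 0) s)) / of_nat (Suc ((\<lambda>s. 4^s - 1) s))"

lemma xq_val: "real_of_rat (xq s) = xr s"
proof -
  have "Suc (4^s - 1) = (4::nat)^s" by simp
  then show ?thesis unfolding xq_def xr_def by (simp add: of_rat_divide of_rat_power)
qed

lemma speedable_X: "speedable X"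
proof -
  have eq: "\<forall>n. xq n = (of_nat (Nf n) - of_nat ((\<lambda>_. 0) n)) / of_nat (Suc ((\<lambda>s. 4^s - 1) n))"
    by (simp add: xq_def)
  have cq: "computable_rat_seq xq"
    unfolding computable_rat_seq_def
    using computable_Nf computable_zero computable_den eq by blast
  have sm: "strict_mono xq"
    using xr_strict unfolding strict_mono_def by (simp add: xq_val[symmetric] of_rat_less)
  have lim: "(\<lambda>n. real_of_rat (xq n)) \<longlonglongrightarrow> X" by (simp add: xq_val X_lim)
  have lc: "left_computable X"
    unfolding left_computable_def using cq sm lim strict_mono_mono by blast
  have fr: "\<exists>\<^sub>F n in sequentially. (X - real_of_rat (xq (Suc n))) / (X - real_of_rat (xq n)) \<le> 1/2"
    unfolding frequently_sequentially
  proof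
    fix N
    obtain s where s: "s \<ge> N" "X - xr (Suc s) \<le> xr (Suc s) - xr s" using rec_stage by blast
    have pos: "0 < X - xr s" using xr_less_X[of s] by simp
    have "(X - xr (Suc s)) / (X - xr s) \<le> 1/2"
      using s(2) pos by (simp add: divide_le_eq)
    then show "\<exists>n\<ge>N. (X - real_of_rat (xq (Suc n))) / (X - real_of_rat (xq n)) \<le> 1/2"
      using s(1) by (auto simp: xq_val)
  qed
  show ?thesis unfolding speedable_def
    using lc cq sm lim fr by (intro conjI exI[of _ "1/2"] exI[of _ xq]) auto
qed

theorem corollary5p5:
  shows "\<exists>x::real. speedable x \<and> \<not> regainingly_approximable x"
  using speedable_X not_RA by blast

end
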